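(* Fix $r\ge0$ and $n\ge0$. The map $\pi\mapsto(P_d^r(\pi),Q_d^r(\pi))$ is a bijection from $B_n$ onto the set of pairs $(P,Q)$ of standard domino tableaux of the same shape $\lambda\in\mathcal P_r(n)$. Moreover, for every $\pi\in B_n$, \[ tc(\pi)=sp(P_d^r(\pi))+sp(Q_d^r(\pi)), \] where $tc(\pi)$ is the number of barred letters of $\pi$.
   Context: Partitions are identified with Young diagrams in English notation: cell $(k,l)$ lies in row $k$ (from the top) and column $l$ (from the left). A domino is a set of two cells sharing an edge (vertical if in one column). $\delta_r=(r,r-1,\dots,1)$; every partition has a 2-core (obtained by repeatedly removing dominoes while staying a partition) equal to a unique $\delta_r$; $\mathcal P_r(n)$ is the set of partitions with 2-core $\delta_r$ and size $|\delta_r|+2n$. A standard domino tableau (SDT) of shape $\lambda\in\mathcal P_r(n)$ is a chain $\delta_r=\lambda^0\subset\cdots\subset\lambda^n=\lambda$ with each $\lambda^k/\lambda^{k-1}$ a domino; $sp(D)$ is half the number of vertical dominoes. $B_n$ is the set of words $\pi=\pi_1\cdots\pi_n$ in letters $\{1,\dots,n,\bar1,\dots,\bar n\}$ in which each $k\in[n]$ occurs exactly once, barred or unbarred. Growth diagram: $M(i,j)=1$ if $\pi_i=j$, $-1$ if $\pi_i=\bar j$, $0$ otherwise. Partitions $\lambda_{(i,j)}$, $1\le i,j\le n+1$, with $\lambda_{(1,j)}=\lambda_{(i,1)}=\delta_r$; for $i,j\in[n]$, with $\lambda=\lambda_{(i,j)},\mu=\lambda_{(i+1,j)},\nu=\lambda_{(i,j+1)}$,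 $\rho=\lambda_{(i+1,j+1)}$ is: (1) if $M(i,j)=1$ (then $\lambda=\mu=\nu$), $\lambda$ with two cells appended to its first row; (2) if $M(i,j)=-1$ (then $\lambda=\mu=\nu$), $\lambda$ with two cells appended to its first column; (3) if $M(i,j)=0$ and $\lambda=\mu$ or $\lambda=\nu$, the largest of $\lambda,\mu,\nu$; (4) otherwise, with dominoes $\gamma=\nu/\lambda$, $\gamma'=\mu/\lambda$: if disjoint, $\lambda\cup\gamma\cup\gamma'$; if they share exactly the cell $(k,l)$, $\lambda\cup\gamma\cup\gamma'\cup\{(k+1,l+1)\}$; if $\gamma=\gamma'$ vertical in column $l$, $\lambda\cup\gamma$ with two cells appended at the bottom of column $l+1$; if $\gamma=\gamma'$ horizontal in row $k$, $\lambda\cup\gamma$ with two cells appended at the end of row $k+1$. Consecutive partitions in the last row/column differ by one domino. $P_d^r(\pi)$ is the SDT given by the chain $\lambda_{(n+1,1)}\subset\cdots\subset\lambda_{(n+1,n+1)}$ and $Q_d^r(\pi)$ the SDT given by $\lambda_{(1,n+1)}\subset\cdots\subset\lambda_{(n+1,n+1)}$. *)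

theory Defs
  imports Complex_Main
begin

text \<open>Young diagrams as sets of cells (k,l), row k, column l, both 1-based (English notation).\<close>
type_synonym cells = "(nat \<times> nat) set"

definition is_partition :: "cells \<Rightarrow> bool" where
  "is_partition la \<longleftrightarrow> finite la \<and>
     (\<forall>(k,l)\<in>la. 1 \<le> k \<and> 1 \<le> l \<and>
        (\<forall>k' l'. 1 \<le> k' \<and> k' \<le> k \<and> 1 \<le> l' \<and> l' \<le> l \<longrightarrow> (k',l') \<in> la))"

definition is_domino :: "cells \<Rightarrow> bool" where
  "is_domino D \<longleftrightarrow> (\<exists>k l. 1 \<le> k \<and> 1 \<le> l \<and> (D = {(k,l),(k+1,l)} \<or> D = {(k,l),(k,l+1)}))"

definition vertical_domino :: "cells \<Rightarrow> bool" where
  "vertical_domino D \<longleftrightarrow> (\<exists>k l. 1 \<le> k \<and> 1 \<le> l \<and> D = {(k,l),(k+1,l)})"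

definition horizontal_domino :: "cells \<Rightarrow> bool" where
  "horizontal_domino D \<longleftrightarrow> (\<exists>k l. 1 \<le> k \<and> 1 \<le> l \<and> D = {(k,l),(k,l+1)})"

definition delta :: "nat \<Rightarrow> cells" where
  "delta r = {(k,l). 1 \<le> k \<and> 1 \<le> l \<and> k + l \<le> r + 1}"

definition row_len :: "cells \<Rightarrow> nat \<Rightarrow> nat" where
  "row_len la k = card {l. (k,l) \<in> la}"

definition col_len :: "cells \<Rightarrow> nat \<Rightarrow> nat" where
  "col_len la l = card {k. (k,l) \<in> la}"

definition domino_removal :: "(cells \<times> cells) set" where
  "domino_removal = {(la, mu). is_partition la \<and> is_partition mu \<and> mu \<subseteq> la \<and> is_domino (la - mu)}"

definition two_core :: "cells \<Rightarrow> cells" where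
  "two_core la = (THE mu. (la, mu) \<in> domino_removal\<^sup>* \<and> \<not> (\<exists>nu. (mu, nu) \<in> domino_removal))"

definition Pr :: "nat \<Rightarrow> nat \<Rightarrow> cells set" where
  "Pr r n = {la. is_partition la \<and> two_core la = delta r \<and> card la = card (delta r) + 2 * n}"

definition is_SDT :: "nat \<Rightarrow> cells \<Rightarrow> cells list \<Rightarrow> bool" where
  "is_SDT r la D \<longleftrightarrow> D \<noteq> [] \<and> hd D = delta r \<and> last D = la \<and>
     (\<forall>i < length D. is_partition (D ! i)) \<and>
     (\<forall>i. i + 1 < length D \<longrightarrow> D ! i \<subseteq> D ! (i+1) \<and> is_domino (D ! (i+1) - D ! i))"

definition sp :: "cells list \<Rightarrow> rat" where
  "sp D = of_nat (card {i. i + 1 < length D \<and> vertical_domino (D ! (i+1) - D ! i)}) / 2"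

datatype letter = Unb nat | Bar nat

fun letter_val :: "letter \<Rightarrow> nat" where
  "letter_val (Unb k) = k" | "letter_val (Bar k) = k"

fun is_barred :: "letter \<Rightarrow> bool" where
  "is_barred (Unb k) = False" | "is_barred (Bar k) = True"

definition Bn :: "nat \<Rightarrow> letter list set" where
  "Bn n = {w. length w = n \<and> set (map letter_val w) \<subseteq> {1..n} \<and>
              (\<forall>k\<in>{1..n}. length (filter (\<lambda>x. letter_val x = k) w) = 1)}"

definition tc :: "letter list \<Rightarrow> nat" where
  "tc w = length (filter is_barred w)"

text \<open>Matrix entry M(i,j), 1-based.\<close>
definition Mentry :: "letter list \<Rightarrow> nat \<Rightarrow> nat \<Rightarrow> int" where
  "Mentry w i j = (if w ! (i - 1) = Unb j then 1 else if w ! (i - 1) = Bar j then -1 else 0)"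

text \<open>Local rule: la = \<lambda>_(i,j), mu = \<lambda>_(i+1,j), nu = \<lambda>_(i,j+1); result \<rho> = \<lambda>_(i+1,j+1).\<close>
definition local_rule :: "int \<Rightarrow> cells \<Rightarrow> cells \<Rightarrow> cells \<Rightarrow> cells" where
  "local_rule m la mu nu =
    (if m = 1 then la \<union> {(1, row_len la 1 + 1), (1, row_len la 1 + 2)}
     else if m = -1 then la \<union> {(col_len la 1 + 1, 1), (col_len la 1 + 2, 1)}
     else if la = mu \<or> la = nu then (if la = mu then nu else mu)
     else
       (let g = nu - la; g' = mu - la in
        if g \<inter> g' = {} then la \<union> g \<union> g'
        else if card (g \<inter> g') = 1 then la \<union> g \<union> g' \<union> (\<lambda>(k,l). (k+1, l+1)) ` (g \<inter> g')
        else if g = g' \<and> vertical_domino g then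
          (let l = the_elem (snd ` g) in
           la \<union> g \<union> {(col_len (la \<union> g) (l+1) + 1, l+1), (col_len (la \<union> g) (l+1) + 2, l+1)})
        else
          (let k = the_elem (fst ` g) in
           la \<union> g \<union> {(k+1, row_len (la \<union> g) (k+1) + 1), (k+1, row_len (la \<union> g) (k+1) + 2)})))"

text \<open>Growth diagram, 0-based: grow w r i j = \<lambda>_(i+1,j+1).\<close>
fun grow :: "letter list \<Rightarrow> nat \<Rightarrow> nat \<Rightarrow> nat \<Rightarrow> cells" where
  "grow w r 0 j = delta r"
| "grow w r (Suc i) 0 = delta r"
| "grow w r (Suc i) (Suc j) =
     local_rule (Mentry w (i+1) (j+1)) (grow w r i j) (grow w r (Suc i) j) (grow w r i (Suc j))"

text \<open>P_d^r: chain \<lambda>_(n+1,1) \<subseteq> ... \<subseteq> \<lambda>_(n+1,n+1); Q_d^r: chain \<lambda>_(1,n+1) \<subseteq> ... \<subseteq> \<lambda>_(n+1,n+1).\<close>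
definition Pd :: "nat \<Rightarrow> letter list \<Rightarrow> cells list" where
  "Pd r w = map (\<lambda>j. grow w r (length w) j) [0..<length w + 1]"

definition Qd :: "nat \<Rightarrow> letter list \<Rightarrow> cells list" where
  "Qd r w = map (\<lambda>i. grow w r i (length w)) [0..<length w + 1]"

end

theory Submission
  imports Defs
begin


lemma part_fin: "is_partition la \<Longrightarrow> finite la"
  by (simp add: is_partition_def)

lemma part_pos: "is_partition la \<Longrightarrow> (k,l) \<in> la \<Longrightarrow> 1 \<le> k \<and> 1 \<le> l"
  unfolding is_partition_def by blast

lemma part_down: "is_partition la \<Longrightarrow> (k,l) \<in> la \<Longrightarrow> 1 \<le> k' \<Longrightarrow> k' \<le> k \<Longrightarrow> 1 \<le> l' \<Longrightarrow> l' \<le> l \<Longrightarrow> (k',l') \<in> la"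
  unfolding is_partition_def by blast

lemma part_downL: "is_partition la \<Longrightarrow> (k,l) \<in> la \<Longrightarrow> k' \<le> k \<Longrightarrow> l' \<le> l \<Longrightarrow> 1 \<le> k' \<Longrightarrow> 1 \<le> l' \<Longrightarrow> (k',l') \<in> la"
  using part_down by blast

lemma partI: "finite la \<Longrightarrow> (\<And>k l. (k,l) \<in> la \<Longrightarrow> 1 \<le> k \<and> 1 \<le> l) \<Longrightarrow>
   (\<And>k l k' l'. (k,l) \<in> la \<Longrightarrow> 1 \<le> k' \<Longrightarrow> k' \<le> k \<Longrightarrow> 1 \<le> l' \<Longrightarrow> l' \<le> l \<Longrightarrow> (k',l') \<in> la) \<Longrightarrow> is_partition la"
  unfolding is_partition_def by blast

lemma downset_interval:
  assumes "finite (S::nat set)" "\<And>x. x \<in> S \<Longrightarrow> 1 \<le> x" "\<And>x y. x \<in> S \<Longrightarrow> 1 \<le> y \<Longrightarrow> y \<le> x \<Longrightarrow> y \<in> S"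
  shows "S = {1..card S}"
proof (cases "S = {}")
  case True then show ?thesis by simp
next
  case False
  define M where "M = Max S"
  have "M \<in> S" using assms(1) False M_def by simp
  have "S = {1..M}"
  proof
    show "S \<subseteq> {1..M}" using assms(1,2) M_def by auto
    show "{1..M} \<subseteq> S" using assms(3) \<open>M \<in> S\<close> by auto
  qed
  then show ?thesis by simp
qed

lemma row_set: assumes "is_partition la" shows "{l. (k,l) \<in> la} = {1..row_len la k}"
proof -
  have f: "finite {l. (k,l) \<in> la}"
    using finite_imageI[OF part_fin[OF assms], of snd] by (rule finite_subset[rotated]) force
  have p: "\<And>x. x \<in> {l. (k,l) \<in> la} \<Longrightarrow> 1 \<le> x" using part_pos[OF assms] by blast
  have d: "\<And>x y. x \<in> {l. (k,l) \<in> la} \<Longrightarrow> 1 \<le> y \<Longrightarrow> y \<le> x \<Longrightarrow> y \<in> {l. (k,l) \<in> la}"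
    using part_pos[OF assms] part_down[OF assms] by (metis le_refl mem_Collect_eq)
  show ?thesis unfolding row_len_def by (rule downset_interval[OF f p d])
qed

lemma col_set: assumes "is_partition la" shows "{k. (k,l) \<in> la} = {1..col_len la l}"
proof -
  have f: "finite {k. (k,l) \<in> la}"
    using finite_imageI[OF part_fin[OF assms], of fst] by (rule finite_subset[rotated]) force
  have p: "\<And>x. x \<in> {k. (k,l) \<in> la} \<Longrightarrow> 1 \<le> x" using part_pos[OF assms] by blast
  have d: "\<And>x y. x \<in> {k. (k,l) \<in> la} \<Longrightarrow> 1 \<le> y \<Longrightarrow> y \<le> x \<Longrightarrow> y \<in> {k. (k,l) \<in> la}"
    using part_pos[OF assms] part_down[OF assms] by (metis le_refl mem_Collect_eq)
  show ?thesis unfolding col_len_def by (rule downset_interval[OF f p d])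
qed

lemma row_char: "is_partition la \<Longrightarrow> (k,l) \<in> la \<longleftrightarrow> 1 \<le> l \<and> l \<le> row_len la k"
  using row_set[of la k] by (metis (no_types, lifting) atLeastAtMost_iff mem_Collect_eq)

lemma col_char: "is_partition la \<Longrightarrow> (k,l) \<in> la \<longleftrightarrow> 1 \<le> k \<and> k \<le> col_len la l"
  using col_set[of la l] by (metis (no_types, lifting) atLeastAtMost_iff mem_Collect_eq)

lemma part_Un: "is_partition a \<Longrightarrow> is_partition b \<Longrightarrow> is_partition (a \<union> b)"
  unfolding is_partition_def by blast

lemma part_Int: "is_partition a \<Longrightarrow> is_partition b \<Longrightarrow> is_partition (a \<inter> b)"
  unfolding is_partition_def by blast

definition vdom :: "nat \<Rightarrow> nat \<Rightarrow> cells" where "vdom k l = {(k,l),(k+1,l)}"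
definition hdom :: "nat \<Rightarrow> nat \<Rightarrow> cells" where "hdom k l = {(k,l),(k,l+1)}"

lemma is_domino_iff: "is_domino D \<longleftrightarrow> (\<exists>k l. 1 \<le> k \<and> 1 \<le> l \<and> (D = vdom k l \<or> D = hdom k l))"
  unfolding is_domino_def vdom_def hdom_def by blast

lemma vertical_iff: "vertical_domino D \<longleftrightarrow> (\<exists>k l. 1 \<le> k \<and> 1 \<le> l \<and> D = vdom k l)"
  unfolding vertical_domino_def vdom_def by blast

lemma vdom_ne_hdom[simp]: "vdom a b \<noteq> hdom c d" "hdom c d \<noteq> vdom a b"
  unfolding vdom_def hdom_def by (auto simp: doubleton_eq_iff)

lemma vdom_eq[simp]: "vdom a b = vdom c d \<longleftrightarrow> a = c \<and> b = d"
  unfolding vdom_def by (auto simp: doubleton_eq_iff)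
lemma hdom_eq[simp]: "hdom a b = hdom c d \<longleftrightarrow> a = c \<and> b = d"
  unfolding hdom_def by (auto simp: doubleton_eq_iff)

lemma vert_vdom[simp]: "vertical_domino (vdom k l) \<longleftrightarrow> 1 \<le> k \<and> 1 \<le> l"
  unfolding vertical_iff by auto
lemma vert_hdom[simp]: "\<not> vertical_domino (hdom k l)"
  unfolding vertical_iff by auto
lemma vert_empty[simp]: "\<not> vertical_domino {}"
  unfolding vertical_iff vdom_def by auto

lemma card_vdom[simp]: "card (vdom k l) = 2" unfolding vdom_def by simp
lemma card_hdom[simp]: "card (hdom k l) = 2" unfolding hdom_def by simp
lemma fin_vdom[simp]: "finite (vdom k l)" unfolding vdom_def by simp
lemma fin_hdom[simp]: "finite (hdom k l)" unfolding hdom_def by simp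

lemma domino_card: "is_domino D \<Longrightarrow> card D = 2 \<and> finite D"
  unfolding is_domino_iff by auto


lemma delta_mem: "(k,l) \<in> delta r \<longleftrightarrow> 1 \<le> k \<and> 1 \<le> l \<and> k + l \<le> r + 1"
  unfolding delta_def by simp

lemma delta_part: "is_partition (delta r)"
proof (rule partI)
  show "finite (delta r)"
    by (rule finite_subset[of _ "{1..r}\<times>{1..r}"]) (auto simp: delta_mem)
qed (auto simp: delta_mem)

lemma delta_terminal: "\<not> (delta r, nu) \<in> domino_removal"
proof
  assume "(delta r, nu) \<in> domino_removal"
  then have p: "is_partition nu" and s: "nu \<subseteq> delta r" and d: "is_domino (delta r - nu)"
    unfolding domino_removal_def by auto
  from d obtain k l where kl: "1 \<le> k" "1 \<le> l" and D: "delta r - nu = vdom k l \<or> delta r - nu = hdom k l"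
    unfolding is_domino_iff by blast
  from D show False
  proof
    assume e: "delta r - nu = vdom k l"
    then have "(k+1,l) \<in> delta r" "(k,l) \<notin> nu" unfolding vdom_def by auto
    then have "(k,l+1) \<in> delta r" using kl by (simp add: delta_mem)
    moreover have "(k,l+1) \<notin> vdom k l" unfolding vdom_def by simp
    ultimately have "(k,l+1) \<in> nu" using e by blast
    then have "(k,l) \<in> nu" using part_down[OF p, of k "l+1" k l] kl by simp
    with \<open>(k,l) \<notin> nu\<close> show False by simp
  next
    assume e: "delta r - nu = hdom k l"
    then have "(k,l+1) \<in> delta r" "(k,l) \<notin> nu" unfolding hdom_def by auto
    then have "(k+1,l) \<in> delta r" using kl by (simp add: delta_mem)
    moreover have "(k+1,l) \<notin> hdom k l" unfolding hdom_def by simp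
    ultimately have "(k+1,l) \<in> nu" using e by blast
    then have "(k,l) \<in> nu" using part_down[OF p, of "k+1" l k l] kl by simp
    with \<open>(k,l) \<notin> nu\<close> show False by simp
  qed
qed

lemma removalI: "is_partition la \<Longrightarrow> D \<subseteq> la \<Longrightarrow> is_domino D \<Longrightarrow> is_partition (la - D) \<Longrightarrow> (la, la - D) \<in> domino_removal"
  unfolding domino_removal_def by (auto simp: Diff_Diff_Int Int_absorb1)

lemma term_A:
  assumes p: "is_partition la" and t: "\<not> (\<exists>nu. (la,nu) \<in> domino_removal)"
    and kl: "(k,l) \<in> la" "2 \<le> l"
  shows "(k+1,l-1) \<in> la"
proof (rule ccontr)
  assume nk: "(k+1,l-1) \<notin> la"
  define L where "L = row_len la k"
  have rc: "\<And>b. (k,b) \<in> la \<longleftrightarrow> 1 \<le> b \<and> b \<le> L" using row_char[OF p] L_def by blast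
  have k1: "1 \<le> k" using part_pos[OF p kl(1)] by simp
  have lL: "l \<le> L" using rc kl by blast
  define D where "D = hdom k (L-1)"
  have Dsub: "D \<subseteq> la" using rc lL kl(2) unfolding D_def hdom_def by auto
  have Dd: "is_domino D" unfolding D_def is_domino_iff using k1 lL kl(2) by (intro exI[of _ k] exI[of _ "L-1"]) auto
  have "is_partition (la - D)"
  proof (rule partI)
    show "finite (la - D)" using part_fin[OF p] by simp
    show "\<And>a b. (a,b) \<in> la - D \<Longrightarrow> 1 \<le> a \<and> 1 \<le> b" using part_pos[OF p] by blast
    fix a b a' b' assume ab: "(a,b) \<in> la - D" and h: "1 \<le> a'" "a' \<le> a" "1 \<le> b'" "b' \<le> b"
    have "(a',b') \<in> la" using part_down[OF p _ h] ab by blast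
    moreover have "(a',b') \<notin> D"
    proof
      assume "(a',b') \<in> D"
      then have a'k: "a' = k" and b'L: "L - 1 \<le> b'" unfolding D_def hdom_def by auto
      show False
      proof (cases "a = k")
        case True
        then have "b \<le> L" using rc ab by blast
        then have "(a,b) \<in> D" using True b'L h unfolding D_def hdom_def by auto
        then show False using ab by blast
      next
        case False
        then have "k + 1 \<le> a" using a'k h by simp
        moreover have "l - 1 \<le> b" using b'L h lL by simp
        ultimately have "(k+1,l-1) \<in> la" using part_down[OF p, of a b "k+1" "l-1"] ab kl(2) by auto
        then show False using nk by simp
      qed
    qed
    ultimately show "(a',b') \<in> la - D" by blast
  qed
  then have "(la, la - D) \<in> domino_removal" using removalI[OF p Dsub Dd] by blast
  then show False using t by blast
qed

lemma term_B:
  assumes p: "is_partition la" and t: "\<not> (\<exists>nu. (la,nu) \<in> domino_removal)"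
    and kl: "(k,l) \<in> la" "2 \<le> k"
  shows "(k-1,l+1) \<in> la"
proof (rule ccontr)
  assume nk: "(k-1,l+1) \<notin> la"
  define L where "L = col_len la l"
  have rc: "\<And>b. (b,l) \<in> la \<longleftrightarrow> 1 \<le> b \<and> b \<le> L" using col_char[OF p] L_def by blast
  have k1: "1 \<le> l" using part_pos[OF p kl(1)] by simp
  have lL: "k \<le> L" using rc kl by blast
  define D where "D = vdom (L-1) l"
  have Dsub: "D \<subseteq> la" using rc lL kl(2) unfolding D_def vdom_def by auto
  have Dd: "is_domino D" unfolding D_def is_domino_iff using k1 lL kl(2) by (intro exI[of _ "L-1"] exI[of _ l]) auto
  have "is_partition (la - D)"
  proof (rule partI)
    show "finite (la - D)" using part_fin[OF p] by simp
    show "\<And>a b. (a,b) \<in> la - D \<Longrightarrow> 1 \<le> a \<and> 1 \<le> b" using part_pos[OF p] by blast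
    fix a b a' b' assume ab: "(a,b) \<in> la - D" and h: "1 \<le> a'" "a' \<le> a" "1 \<le> b'" "b' \<le> b"
    have "(a',b') \<in> la" using part_down[OF p _ h] ab by blast
    moreover have "(a',b') \<notin> D"
    proof
      assume "(a',b') \<in> D"
      then have a'k: "b' = l" and b'L: "L - 1 \<le> a'" unfolding D_def vdom_def by auto
      show False
      proof (cases "b = l")
        case True
        then have "a \<le> L" using rc ab by blast
        then have "(a,b) \<in> D" using True b'L h unfolding D_def vdom_def by auto
        then show False using ab by blast
      next
        case False
        then have "l + 1 \<le> b" using a'k h by simp
        moreover have "k - 1 \<le> a" using b'L h lL by simp
        ultimately have "(k-1,l+1) \<in> la" using part_down[OF p, of a b "k-1" "l+1"] ab kl(2) by auto
        then show False using nk by simp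
      qed
    qed
    ultimately show "(a',b') \<in> la - D" by blast
  qed
  then have "(la, la - D) \<in> domino_removal" using removalI[OF p Dsub Dd] by blast
  then show False using t by blast
qed

lemma terminal_delta:
  assumes p: "is_partition la" and t: "\<not> (\<exists>nu. (la,nu) \<in> domino_removal)"
  shows "la = delta (row_len la 1)"
proof -
  define s where "s = row_len la 1"
  have r1: "\<And>b. (1,b) \<in> la \<longleftrightarrow> 1 \<le> b \<and> b \<le> s" using row_char[OF p] s_def by blast
  have fw: "\<And>l. (k,l) \<in> la \<Longrightarrow> k + l \<le> s + 1" if "1 \<le> k" for k
    using that
  proof (induction k rule: nat_induct_at_least)
    case base then show ?case using r1 by fastforce
  next
    case (Suc k)
    then have "(k, l+1) \<in> la" using term_B[OF p t Suc.prems, of] by (metis Suc_1 Suc_le_mono diff_Suc_1)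
    then show ?case using Suc.IH by fastforce
  qed
  have bw: "\<And>l. 1 \<le> l \<Longrightarrow> k + l \<le> s + 1 \<Longrightarrow> (k,l) \<in> la" if "1 \<le> k" for k
    using that
  proof (induction k rule: nat_induct_at_least)
    case base then show ?case using r1 by simp
  next
    case (Suc k)
    then have "(k, l+1) \<in> la" by simp
    then have "(k+1, (l+1)-1) \<in> la" by (rule term_A[OF p t]) (use Suc.prems in simp)
    then show ?case by simp
  qed
  have "la = delta s"
  proof (safe)
    fix a b assume "(a,b) \<in> la"
    then show "(a,b) \<in> delta s" using fw part_pos[OF p] by (simp add: delta_mem)
  next
    fix a b assume "(a,b) \<in> delta s"
    then show "(a,b) \<in> la" using bw by (simp add: delta_mem)
  qed
  then show ?thesis using s_def by simp
qed

definition colr :: "cells \<Rightarrow> int" where "colr X = (\<Sum>x\<in>X. (-1::int) ^ (fst x + snd x))"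

lemma colr_removal: assumes "(la, mu) \<in> domino_removal" shows "colr la = colr mu"
proof -
  from assms have p: "is_partition la" and s: "mu \<subseteq> la" and d: "is_domino (la - mu)"
    unfolding domino_removal_def by auto
  have "colr la = colr mu + colr (la - mu)"
    unfolding colr_def using sum.subset_diff[OF s part_fin[OF p]] by (simp add: add.commute)
  moreover have "colr (la - mu) = 0"
    using d unfolding is_domino_iff colr_def vdom_def hdom_def by auto
  ultimately show ?thesis by simp
qed

lemma colr_rtrancl: "(la, mu) \<in> domino_removal\<^sup>* \<Longrightarrow> colr la = colr mu"
  by (induction rule: rtrancl_induct) (auto dest: colr_removal)

lemma part_rtrancl: "(la, mu) \<in> domino_removal\<^sup>* \<Longrightarrow> is_partition la \<Longrightarrow> is_partition mu"
  by (induction rule: rtrancl_induct) (auto simp: domino_removal_def)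

lemma delta_Suc: "delta (Suc s) = delta s \<union> (\<lambda>k. (k, s + 2 - k)) ` {1..s+1}"
  unfolding delta_def by (auto simp: image_iff)

lemma colr_delta: "colr (delta s) = (if even s then - int (s div 2) else int ((s+1) div 2))"
proof (induction s)
  case 0
  have "delta 0 = {}" unfolding delta_def by auto
  then show ?case unfolding colr_def by simp
next
  case (Suc s)
  let ?A = "(\<lambda>k. (k, s + 2 - k)) ` {1..s+1}"
  have disj: "delta s \<inter> ?A = {}" unfolding delta_def by auto
  have fin: "finite (delta s)" using part_fin[OF delta_part] by blast
  have inj: "inj_on (\<lambda>k. (k, s + 2 - k)) {1..s+1}" by (auto simp: inj_on_def)
  have "colr ?A = (\<Sum>k\<in>{1..s+1}. (\<lambda>x. (-1::int) ^ (fst x + snd x)) (k, s + 2 - k))"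
    unfolding colr_def using sum.reindex[OF inj, of "\<lambda>x. (-1::int) ^ (fst x + snd x)"] by (simp add: comp_def)
  also have "\<dots> = (\<Sum>k\<in>{1..s+1}. (-1::int) ^ (k + (s + 2 - k)))" by simp
  also have "\<dots> = (\<Sum>k\<in>{1..s+1}. (-1::int) ^ (s + 2))"
    by (rule sum.cong) auto
  also have "\<dots> = int (s+1) * (-1) ^ s" by simp
  finally have cA: "colr ?A = int (s+1) * (-1) ^ s" .
  have "colr (delta (Suc s)) = colr (delta s) + colr ?A"
    unfolding delta_Suc colr_def by (rule sum.union_disjoint) (use fin disj in auto)
  then show ?case using Suc.IH cA by (auto elim: oddE)
qed

lemma colr_delta_inj: "colr (delta s) = colr (delta r) \<Longrightarrow> s = r"
  unfolding colr_delta by (auto split: if_splits elim!: oddE evenE)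

lemma two_core_eq:
  assumes "is_partition la" "(la, delta r) \<in> domino_removal\<^sup>*"
  shows "two_core la = delta r"
  unfolding two_core_def
proof (rule the_equality)
  show "(la, delta r) \<in> domino_removal\<^sup>* \<and> \<not> (\<exists>nu. (delta r, nu) \<in> domino_removal)"
    using assms(2) delta_terminal by blast
next
  fix mu assume h: "(la, mu) \<in> domino_removal\<^sup>* \<and> \<not> (\<exists>nu. (mu, nu) \<in> domino_removal)"
  then have pm: "is_partition mu" using part_rtrancl assms(1) by blast
  have e: "mu = delta (row_len mu 1)" using terminal_delta[OF pm] h by blast
  have "colr mu = colr (delta r)" using colr_rtrancl h colr_rtrancl[OF assms(2)] by metis
  then have "row_len mu 1 = r" using colr_delta_inj e by metis
  then show "mu = delta r" using e by simp
qed


definition st :: "cells \<Rightarrow> cells \<Rightarrow> bool" where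
  "st la mu \<longleftrightarrow> la \<subseteq> mu \<and> (mu = la \<or> is_domino (mu - la))"

definition vd :: "cells \<Rightarrow> cells \<Rightarrow> nat" where
  "vd la mu = (if vertical_domino (mu - la) then 1 else 0)"

definition valid :: "int \<Rightarrow> cells \<Rightarrow> cells \<Rightarrow> cells \<Rightarrow> bool" where
  "valid m la mu nu \<longleftrightarrow> is_partition la \<and> is_partition mu \<and> is_partition nu \<and> st la mu \<and> st la nu
     \<and> m \<in> {-1,0,1} \<and> (m \<noteq> 0 \<longrightarrow> mu = la \<and> nu = la)"

definition bck :: "cells \<Rightarrow> cells \<Rightarrow> cells \<Rightarrow> int \<times> cells" where
"bck mu nu rho = (if mu = nu then
   (if rho = mu then (0, mu)
    else if fst ` (rho - mu) = {1} then (1, mu)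
    else if snd ` (rho - mu) = {1} then (-1, mu)
    else if vertical_domino (rho - mu) then
      (let l = the_elem (snd ` (rho - mu)) - 1 in (0, mu - vdom (col_len mu l - 1) l))
    else (let k = the_elem (fst ` (rho - mu)) - 1 in (0, mu - hdom k (row_len mu k - 1))))
  else if rho = mu then (0, nu)
  else if rho = nu then (0, mu)
  else if (rho - mu) \<inter> (rho - nu) = {} then (0, mu \<inter> nu)
  else (0, (mu \<inter> nu) - (\<lambda>(k,l). (k-1, l-1)) ` ((rho - mu) \<inter> (rho - nu))))"

definition LF :: "int \<Rightarrow> cells \<Rightarrow> cells \<Rightarrow> cells \<Rightarrow> cells \<Rightarrow> bool" where
  "LF m la mu nu rho \<longleftrightarrow> is_partition rho \<and> st mu rho \<and> st nu rho
     \<and> card rho + card la = card mu + card nu + (if m = 0 then 0 else 2)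
     \<and> vd mu rho + vd nu rho = vd la mu + vd la nu + (if m = -1 then 2 else 0)
     \<and> bck mu nu rho = (m, la)"

lemma st_refl[simp]: "st a a" unfolding st_def by simp
lemma vd_refl[simp]: "vd a a = 0" unfolding vd_def by simp

lemma fst_vdom: "fst ` vdom k l = {k, k+1}" unfolding vdom_def by auto
lemma snd_vdom: "snd ` vdom k l = {l}" unfolding vdom_def by auto
lemma fst_hdom: "fst ` hdom k l = {k}" unfolding hdom_def by auto
lemma snd_hdom: "snd ` hdom k l = {l, l+1}" unfolding hdom_def by auto

lemma LF_I: "is_partition rho \<Longrightarrow> st mu rho \<Longrightarrow> st nu rho \<Longrightarrow>
   card rho + card la = card mu + card nu + (if m = 0 then 0 else 2) \<Longrightarrow>
   vd mu rho + vd nu rho = vd la mu + vd la nu + (if m = -1 then 2 else 0) \<Longrightarrow>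
   bck mu nu rho = (m, la) \<Longrightarrow> LF m la mu nu rho"
  unfolding LF_def by blast

lemma stI: "la \<subseteq> mu \<Longrightarrow> is_domino (mu - la) \<Longrightarrow> st la mu" unfolding st_def by blast

lemma bck_same: "bck mu mu mu = (0, mu)" unfolding bck_def by simp
lemma bck_1: "rho \<noteq> mu \<Longrightarrow> fst ` (rho - mu) = {1} \<Longrightarrow> bck mu mu rho = (1, mu)"
  unfolding bck_def by simp
lemma bck_m1: "rho \<noteq> mu \<Longrightarrow> fst ` (rho - mu) \<noteq> {1} \<Longrightarrow> snd ` (rho - mu) = {1} \<Longrightarrow> bck mu mu rho = (-1, mu)"
  unfolding bck_def by simp
lemma bck_v: "rho \<noteq> mu \<Longrightarrow> fst ` (rho - mu) \<noteq> {1} \<Longrightarrow> snd ` (rho - mu) \<noteq> {1} \<Longrightarrow>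
   vertical_domino (rho - mu) \<Longrightarrow> the_elem (snd ` (rho - mu)) = l + 1 \<Longrightarrow>
   bck mu mu rho = (0, mu - vdom (col_len mu l - 1) l)"
  unfolding bck_def by simp
lemma bck_h: "rho \<noteq> mu \<Longrightarrow> fst ` (rho - mu) \<noteq> {1} \<Longrightarrow> snd ` (rho - mu) \<noteq> {1} \<Longrightarrow>
   \<not> vertical_domino (rho - mu) \<Longrightarrow> the_elem (fst ` (rho - mu)) = k + 1 \<Longrightarrow>
   bck mu mu rho = (0, mu - hdom k (row_len mu k - 1))"
  unfolding bck_def by simp
lemma bck_mu: "mu \<noteq> nu \<Longrightarrow> bck mu nu mu = (0, nu)" unfolding bck_def by simp
lemma bck_nu: "mu \<noteq> nu \<Longrightarrow> bck mu nu nu = (0, mu)" unfolding bck_def by simp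
lemma bck_disj: "mu \<noteq> nu \<Longrightarrow> rho \<noteq> mu \<Longrightarrow> rho \<noteq> nu \<Longrightarrow> (rho - mu) \<inter> (rho - nu) = {} \<Longrightarrow>
   bck mu nu rho = (0, mu \<inter> nu)" unfolding bck_def by simp
lemma bck_one: "mu \<noteq> nu \<Longrightarrow> rho \<noteq> mu \<Longrightarrow> rho \<noteq> nu \<Longrightarrow> (rho - mu) \<inter> (rho - nu) \<noteq> {} \<Longrightarrow>
   bck mu nu rho = (0, (mu \<inter> nu) - (\<lambda>(k,l). (k-1, l-1)) ` ((rho - mu) \<inter> (rho - nu)))"
  unfolding bck_def by simp

lemma dom_hdom: "1 \<le> k \<Longrightarrow> 1 \<le> l \<Longrightarrow> is_domino (hdom k l)" unfolding is_domino_iff by blast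
lemma dom_vdom: "1 \<le> k \<Longrightarrow> 1 \<le> l \<Longrightarrow> is_domino (vdom k l)" unfolding is_domino_iff by blast

lemma card_add2: "finite A \<Longrightarrow> A \<inter> B = {} \<Longrightarrow> card B = 2 \<Longrightarrow> finite B \<Longrightarrow> card (A \<union> B) = card A + 2"
  by (simp add: card_Un_disjoint)

lemma case_p1:
  assumes p: "is_partition la"
  shows "LF 1 la la la (local_rule 1 la la la)"
proof -
  define R where "R = row_len la 1"
  have rc: "\<And>b. (1,b) \<in> la \<longleftrightarrow> 1 \<le> b \<and> b \<le> R" using row_char[OF p] R_def by blast
  have rho: "local_rule 1 la la la = la \<union> hdom 1 (R+1)"
    unfolding local_rule_def R_def hdom_def by simp
  have disj: "la \<inter> hdom 1 (R+1) = {}" using rc[of "R+1"] rc[of "R+2"] unfolding hdom_def by auto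
  have diff: "(la \<union> hdom 1 (R+1)) - la = hdom 1 (R+1)" using disj by blast
  have pr: "is_partition (la \<union> hdom 1 (R+1))"
  proof (rule partI)
    show "finite (la \<union> hdom 1 (R + 1))" using part_fin[OF p] by simp
    show "\<And>k l. (k, l) \<in> la \<union> hdom 1 (R + 1) \<Longrightarrow> 1 \<le> k \<and> 1 \<le> l"
      using part_pos[OF p] unfolding hdom_def by auto
    fix k l k' l' assume h: "(k, l) \<in> la \<union> hdom 1 (R + 1)" "1 \<le> k'" "k' \<le> k" "1 \<le> l'" "l' \<le> l"
    show "(k', l') \<in> la \<union> hdom 1 (R + 1)"
    proof (cases "(k,l) \<in> la")
      case True then show ?thesis using part_down[OF p True h(2-5)] by blast
    next
      case False
      then have "k = 1" "l \<le> R + 2" using h(1) unfolding hdom_def by auto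
      then show ?thesis using rc[of l'] h unfolding hdom_def by (cases "l' \<le> R") auto
    qed
  qed
  have dom: "is_domino (hdom 1 (R+1))" by (rule dom_hdom) auto
  have nd: "la \<union> hdom 1 (R+1) \<noteq> la" using disj unfolding hdom_def by auto
  have cd: "card (la \<union> hdom 1 (R+1)) = card la + 2"
    by (rule card_add2[OF part_fin[OF p] disj]) auto
  have b: "bck la la (la \<union> hdom 1 (R+1)) = (1, la)"
    by (rule bck_1[OF nd]) (simp only: diff fst_hdom)
  have s: "st la (la \<union> hdom 1 (R+1))" by (rule stI) (auto simp only: diff dom)
  have v: "vd la (la \<union> hdom 1 (R+1)) = 0" unfolding vd_def diff by simp
  show ?thesis unfolding rho
    by (rule LF_I[OF pr s s]) (use cd v b in simp_all)
qed

lemma case_m1: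
  assumes p: "is_partition la"
  shows "LF (-1) la la la (local_rule (-1) la la la)"
proof -
  define R where "R = col_len la 1"
  have rc: "\<And>b. (b,1) \<in> la \<longleftrightarrow> 1 \<le> b \<and> b \<le> R" using col_char[OF p] R_def by blast
  have rho: "local_rule (-1) la la la = la \<union> vdom (R+1) 1"
    unfolding local_rule_def R_def vdom_def by simp
  have disj: "la \<inter> vdom (R+1) 1 = {}" using rc[of "R+1"] rc[of "R+2"] unfolding vdom_def by auto
  have diff: "(la \<union> vdom (R+1) 1) - la = vdom (R+1) 1" using disj by blast
  have pr: "is_partition (la \<union> vdom (R+1) 1)"
  proof (rule partI)
    show "finite (la \<union> vdom (R+1) 1)" using part_fin[OF p] by simp
    show "\<And>k l. (k, l) \<in> la \<union> vdom (R+1) 1 \<Longrightarrow> 1 \<le> k \<and> 1 \<le> l"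
      using part_pos[OF p] unfolding vdom_def by auto
    fix k l k' l' assume h: "(k, l) \<in> la \<union> vdom (R+1) 1" "1 \<le> k'" "k' \<le> k" "1 \<le> l'" "l' \<le> l"
    show "(k', l') \<in> la \<union> vdom (R+1) 1"
    proof (cases "(k,l) \<in> la")
      case True then show ?thesis using part_down[OF p True h(2-5)] by blast
    next
      case False
      then have "l = 1" "k \<le> R + 2" using h(1) unfolding vdom_def by auto
      then show ?thesis using rc[of k'] h unfolding vdom_def by (cases "k' \<le> R") auto
    qed
  qed
  have dom: "is_domino (vdom (R+1) 1)" by (rule dom_vdom) auto
  have nd: "la \<union> vdom (R+1) 1 \<noteq> la" using disj unfolding vdom_def by auto
  have cd: "card (la \<union> vdom (R+1) 1) = card la + 2"
    by (rule card_add2[OF part_fin[OF p] disj]) auto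
  have f1: "fst ` ((la \<union> vdom (R+1) 1) - la) \<noteq> {1}" unfolding diff fst_vdom by (auto simp: doubleton_eq_iff)
  have b: "bck la la (la \<union> vdom (R+1) 1) = (-1, la)"
    by (rule bck_m1[OF nd f1]) (simp only: diff snd_vdom)
  have s: "st la (la \<union> vdom (R+1) 1)" by (rule stI) (auto simp only: diff dom)
  have v: "vd la (la \<union> vdom (R+1) 1) = 1" unfolding vd_def diff by simp
  show ?thesis unfolding rho
    by (rule LF_I[OF pr s s]) (use cd v b in simp_all)
qed

lemma st_card: "st la nu \<Longrightarrow> finite nu \<Longrightarrow> card nu = card la + (if nu = la then 0 else 2)"
proof -
  assume s: "st la nu" and f: "finite nu"
  show ?thesis
  proof (cases "nu = la")
    case False
    then have d: "is_domino (nu - la)" and sub: "la \<subseteq> nu" using s unfolding st_def by auto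
    have "card nu = card la + card (nu - la)"
      using card_Diff_subset[OF finite_subset[OF sub f] sub] card_mono[OF f sub] by simp
    then show ?thesis using domino_card[OF d] False by simp
  qed simp
qed

lemma case_eq_mu:
  assumes p: "is_partition la" "is_partition nu" and s: "st la nu"
  shows "LF 0 la la nu (local_rule 0 la la nu)"
proof -
  have rho: "local_rule 0 la la nu = nu" unfolding local_rule_def by simp
  have b: "bck la nu nu = (0, la)" unfolding bck_def by simp
  show ?thesis unfolding rho
    by (rule LF_I[OF p(2) s st_refl]) (use b in simp_all)
qed

lemma case_eq_nu:
  assumes p: "is_partition la" "is_partition mu" and s: "st la mu" and ne: "la \<noteq> mu"
  shows "LF 0 la mu la (local_rule 0 la mu la)"
proof -
  have rho: "local_rule 0 la mu la = mu" unfolding local_rule_def using ne by simp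
  have b: "bck mu la mu = (0, la)" using bck_mu ne by metis
  show ?thesis unfolding rho
    by (rule LF_I[OF p(2) st_refl s]) (use b in simp_all)
qed


lemma domino_cases: "is_domino g \<Longrightarrow> (\<And>a b. 1 \<le> a \<Longrightarrow> 1 \<le> b \<Longrightarrow> g = vdom a b \<Longrightarrow> P) \<Longrightarrow> (\<And>a b. 1 \<le> a \<Longrightarrow> 1 \<le> b \<Longrightarrow> g = hdom a b \<Longrightarrow> P) \<Longrightarrow> P"
  unfolding is_domino_iff by blast

lemma dom_eq_if_sub: "is_domino g \<Longrightarrow> is_domino g' \<Longrightarrow> g \<subseteq> g' \<Longrightarrow> g = g'"
  using domino_card card_subset_eq by metis

lemma tl_lemma:
  assumes pu: "is_partition (la \<union> g')" and dj: "la \<inter> g = {}" and dg: "g = vdom a b \<or> g = hdom a b"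
    and x: "x \<in> g" "x \<in> g'" and ne: "g \<noteq> g'" and dg': "is_domino g'" and ab: "1 \<le> a" "1 \<le> b"
  shows "x = (a,b)"
proof (rule ccontr)
  assume nx: "x \<noteq> (a,b)"
  have dgd: "is_domino g" using dg ab dom_vdom dom_hdom by blast
  have gx: "g = {(a,b), x}" and le: "a \<le> fst x" "b \<le> snd x" using dg x(1) nx unfolding vdom_def hdom_def by auto
  show False
  proof (cases "(a,b) \<in> g'")
    case True
    then have "g \<subseteq> g'" using gx x(2) by blast
    then show False using dom_eq_if_sub[OF dgd dg'] ne by blast
  next
    case False
    have "x \<in> la \<union> g'" using x(2) by blast
    then have "(a,b) \<in> la \<union> g'" using part_down[OF pu, of "fst x" "snd x" a b] le ab by simp
    then have "(a,b) \<in> la" using False by blast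
    moreover have "(a,b) \<in> g" using gx by blast
    ultimately show False using dj by blast
  qed
qed

lemma classify_fwd:
  assumes p1: "is_partition (la \<union> g)" and p2: "is_partition (la \<union> g')"
    and d1: "la \<inter> g = {}" and d2: "la \<inter> g' = {}" and dg: "is_domino g" and dg': "is_domino g'"
    and ne: "g \<noteq> g'" and it: "g \<inter> g' \<noteq> {}"
  shows "\<exists>k l. 1 \<le> k \<and> 1 \<le> l \<and> ((g = vdom k l \<and> g' = hdom k l) \<or> (g = hdom k l \<and> g' = vdom k l))"
proof -
  obtain x where x: "x \<in> g" "x \<in> g'" using it by blast
  obtain a b where ab: "1 \<le> a" "1 \<le> b" "g = vdom a b \<or> g = hdom a b" using dg unfolding is_domino_iff by blast
  obtain c d where cd: "1 \<le> c" "1 \<le> d" "g' = vdom c d \<or> g' = hdom c d" using dg' unfolding is_domino_iff by blast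
  have "x = (a,b)" by (rule tl_lemma[OF p2 d1 ab(3) x ne dg' ab(1,2)])
  moreover have "x = (c,d)" by (rule tl_lemma[OF p1 d2 cd(3) x(2,1) ne[symmetric] dg cd(1,2)])
  ultimately have "a = c" "b = d" by auto
  then show ?thesis using ab cd ne by auto
qed

lemma br_lemma:
  assumes pu: "is_partition (rho - d')" and sub: "d \<subseteq> rho" and dd: "d = {x0, y} \<and> fst x0 \<le> fst y \<and> snd x0 \<le> snd y"
    and x: "x \<in> d" "x \<in> d'" and ne: "d \<noteq> d'" and dd': "is_domino d'" and ddd: "is_domino d"
    and pos: "1 \<le> fst x0" "1 \<le> snd x0"
  shows "x = y"
proof (rule ccontr)
  assume nx: "x \<noteq> y"
  then have xx: "x = x0" using dd x by auto
  show False
  proof (cases "y \<in> d'")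
    case True
    then have "d \<subseteq> d'" using dd xx x(2) by blast
    then show False using dom_eq_if_sub[OF ddd dd'] ne by blast
  next
    case False
    have "y \<in> rho - d'" using False sub dd by blast
    then have "x \<in> rho - d'" using part_down[OF pu, of "fst y" "snd y" "fst x" "snd x"] dd xx pos by simp
    then show False using x by blast
  qed
qed

lemma classify_bwd:
  assumes p1: "is_partition (rho - d)" and p2: "is_partition (rho - d')"
    and s1: "d \<subseteq> rho" and s2: "d' \<subseteq> rho" and dg: "is_domino d" and dg': "is_domino d'"
    and ne: "d \<noteq> d'" and it: "d \<inter> d' \<noteq> {}"
  shows "\<exists>k l. 1 \<le> k \<and> 1 \<le> l \<and> ((d = vdom k (l+1) \<and> d' = hdom (k+1) l) \<or> (d = hdom (k+1) l \<and> d' = vdom k (l+1)))"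
proof -
  obtain x where x: "x \<in> d" "x \<in> d'" using it by blast
  obtain a b where ab: "1 \<le> a" "1 \<le> b" "d = vdom a b \<or> d = hdom a b" using dg unfolding is_domino_iff by blast
  obtain c e where cd: "1 \<le> c" "1 \<le> e" "d' = vdom c e \<or> d' = hdom c e" using dg' unfolding is_domino_iff by blast
  define y where "y = (if d = vdom a b then (a+1,b) else (a,b+1))"
  define y' where "y' = (if d' = vdom c e then (c+1,e) else (c,e+1))"
  have dd: "d = {(a,b), y} \<and> fst (a,b) \<le> fst y \<and> snd (a,b) \<le> snd y"
    using ab(3) unfolding y_def vdom_def hdom_def by auto
  have dd': "d' = {(c,e), y'} \<and> fst (c,e) \<le> fst y' \<and> snd (c,e) \<le> snd y'"
    using cd(3) unfolding y'_def vdom_def hdom_def by auto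
  have "x = y" by (rule br_lemma[OF p2 s1 dd x ne dg' dg]) (use ab in auto)
  moreover have "x = y'" by (rule br_lemma[OF p1 s2 dd' x(2,1) ne[symmetric] dg dg']) (use cd in auto)
  ultimately have yy: "y = y'" by simp
  show ?thesis
  proof (cases "d = vdom a b")
    case True
    then have dh: "d' = hdom c e" using yy ne cd(3) unfolding y_def y'_def by auto
    then have "a + 1 = c" "b = e + 1" using yy True unfolding y_def y'_def by auto
    then show ?thesis using True dh ab cd by (intro exI[of _ a] exI[of _ e]) auto
  next
    case False
    then have dh: "d = hdom a b" using ab(3) by blast
    then have dv: "d' = vdom c e" using yy ne cd(3) False unfolding y_def y'_def by auto
    then have "a = c + 1" "b + 1 = e" using yy False dh unfolding y_def y'_def by auto
    then show ?thesis using dh dv ab cd by (intro exI[of _ c] exI[of _ b]) auto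
  qed
qed


lemma lr0_ne: "la \<noteq> mu \<Longrightarrow> la \<noteq> nu \<Longrightarrow> local_rule 0 la mu nu =
  (let g = nu - la; g' = mu - la in
        if g \<inter> g' = {} then la \<union> g \<union> g'
        else if card (g \<inter> g') = 1 then la \<union> g \<union> g' \<union> (\<lambda>(k,l). (k+1, l+1)) ` (g \<inter> g')
        else if g = g' \<and> vertical_domino g then
          (let l = the_elem (snd ` g) in
           la \<union> g \<union> {(col_len (la \<union> g) (l+1) + 1, l+1), (col_len (la \<union> g) (l+1) + 2, l+1)})
        else
          (let k = the_elem (fst ` g) in
           la \<union> g \<union> {(k+1, row_len (la \<union> g) (k+1) + 1), (k+1, row_len (la \<union> g) (k+1) + 2)}))"
  unfolding local_rule_def by simp

lemma case_disj:
  assumes p: "is_partition la" "is_partition mu" "is_partition nu" and s: "st la mu" "st la nu"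
    and ne: "la \<noteq> mu" "la \<noteq> nu" and dj: "(nu - la) \<inter> (mu - la) = {}"
  shows "LF 0 la mu nu (local_rule 0 la mu nu)"
proof -
  have sub: "la \<subseteq> mu" "la \<subseteq> nu" using s unfolding st_def by auto
  have dm: "is_domino (mu - la)" and dn: "is_domino (nu - la)" using s ne unfolding st_def by auto
  have rho: "local_rule 0 la mu nu = mu \<union> nu"
    unfolding lr0_ne[OF ne] Let_def using dj sub by auto
  have d1: "mu \<union> nu - mu = nu - la" using dj sub by blast
  have d2: "mu \<union> nu - nu = mu - la" using dj sub by blast
  have pr: "is_partition (mu \<union> nu)" by (rule part_Un[OF p(2,3)])
  have s1: "st mu (mu \<union> nu)" by (rule stI) (auto simp only: d1 dn)
  have s2: "st nu (mu \<union> nu)" by (rule stI) (auto simp only: d2 dm)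
  have fm: "finite mu" "finite nu" "finite la" using part_fin p by auto
  have c1: "card (mu \<union> nu) = card mu + card (nu - la)"
  proof -
    have "mu \<union> nu = mu \<union> (nu - la)" using sub by blast
    moreover have "mu \<inter> (nu - la) = {}" using dj sub by blast
    ultimately show ?thesis using card_Un_disjoint[of mu "nu - la"] fm by simp
  qed
  have c2: "card mu = card la + 2" "card nu = card la + 2"
    using st_card[OF s(1) fm(1)] st_card[OF s(2) fm(2)] ne by auto
  have c3: "card (nu - la) = 2" using domino_card[OF dn] by simp
  have mn: "mu \<noteq> nu" using dj dn sub domino_card[OF dn] by (metis Diff_cancel Int_absorb card.empty zero_neq_numeral Diff_Int_distrib2 Int_Diff)
  have r1: "mu \<union> nu \<noteq> mu" using d1 domino_card[OF dn] by (metis Diff_cancel card.empty zero_neq_numeral)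
  have r2: "mu \<union> nu \<noteq> nu" using d2 domino_card[OF dm] by (metis Diff_cancel card.empty zero_neq_numeral)
  have b: "bck mu nu (mu \<union> nu) = (0, la)"
  proof -
    have "(mu \<union> nu - mu) \<inter> (mu \<union> nu - nu) = {}" unfolding d1 d2 using dj .
    moreover have "mu \<inter> nu = la" using dj sub by blast
    ultimately show ?thesis using bck_disj[OF mn r1 r2] by simp
  qed
  show ?thesis unfolding rho
    by (rule LF_I[OF pr s1 s2]) (use c1 c2 c3 b d1 d2 in \<open>simp_all add: vd_def\<close>)
qed

lemma case_one:
  assumes p: "is_partition la" "is_partition mu" "is_partition nu"
    and mu: "mu = la \<union> hdom k l" and nu: "nu = la \<union> vdom k l"
    and d1: "la \<inter> hdom k l = {}" and d2: "la \<inter> vdom k l = {}" and kl: "1 \<le> k" "1 \<le> l"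
  shows "LF 0 la mu nu (local_rule 0 la mu nu)"
proof -
  have nla: "(k,l) \<notin> la" "(k+1,l) \<notin> la" "(k,l+1) \<notin> la" using d1 d2 unfolding hdom_def vdom_def by auto
  have nla2: "(k+1,l+1) \<notin> la" using part_down[OF p(1), of "k+1" "l+1" k l] nla(1) kl by auto
  have ne: "la \<noteq> mu" "la \<noteq> nu" using nla mu nu unfolding hdom_def vdom_def by auto
  have g: "nu - la = vdom k l" "mu - la = hdom k l" using mu nu d1 d2 by auto
  have gi: "vdom k l \<inter> hdom k l = {(k,l)}" unfolding vdom_def hdom_def by auto
  define rho where "rho = mu \<union> nu \<union> {(k+1,l+1)}"
  have "local_rule 0 la mu nu = la \<union> vdom k l \<union> hdom k l \<union> (\<lambda>(a,b). (a+1,b+1)) ` {(k,l)}"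
    unfolding lr0_ne[OF ne] Let_def g gi by simp
  then have rho: "local_rule 0 la mu nu = rho" unfolding rho_def mu nu by auto
  have e1: "rho - mu = hdom (k+1) l" unfolding rho_def mu nu using nla nla2 unfolding hdom_def vdom_def by auto
  have e2: "rho - nu = vdom k (l+1)" unfolding rho_def mu nu using nla nla2 unfolding hdom_def vdom_def by auto
  have pmn: "is_partition (mu \<union> nu)" by (rule part_Un[OF p(2,3)])
  have pr: "is_partition rho"
  proof (rule partI)
    show "finite rho" unfolding rho_def using part_fin[OF pmn] by simp
    show "\<And>a b. (a,b) \<in> rho \<Longrightarrow> 1 \<le> a \<and> 1 \<le> b" unfolding rho_def using part_pos[OF pmn] kl by auto
    fix a b a' b' assume h: "(a,b) \<in> rho" "1 \<le> a'" "a' \<le> a" "1 \<le> b'" "b' \<le> b"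
    show "(a',b') \<in> rho"
    proof (cases "(a,b) \<in> mu \<union> nu")
      case True then show ?thesis using part_down[OF pmn True h(2-5)] unfolding rho_def by blast
    next
      case False
      then have ab: "a = k+1" "b = l+1" using h(1) unfolding rho_def by auto
      have in1: "(k+1,l) \<in> mu \<union> nu" "(k,l+1) \<in> mu \<union> nu" unfolding mu nu hdom_def vdom_def by auto
      show ?thesis
      proof (cases "b' \<le> l")
        case True then show ?thesis using part_down[OF pmn in1(1), of a' b'] h ab unfolding rho_def by auto
      next
        case False
        show ?thesis
        proof (cases "a' \<le> k")
          case True then show ?thesis using part_down[OF pmn in1(2), of a' b'] h ab unfolding rho_def by auto
        next
          case False2: False
          then show ?thesis using False h ab unfolding rho_def by auto
        qed
      qed
    qed
  qed
  have s1: "st mu rho" by (rule stI) (use e1 dom_hdom[of "k+1" l] kl in \<open>auto simp: rho_def\<close>)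
  have s2: "st nu rho" by (rule stI) (use e2 dom_vdom[of k "l+1"] kl in \<open>auto simp: rho_def\<close>)
  have fl: "finite la" using part_fin[OF p(1)] .
  have cr: "card rho = card la + 4"
  proof -
    have "rho = la \<union> {(k,l),(k+1,l),(k,l+1),(k+1,l+1)}" unfolding rho_def mu nu hdom_def vdom_def by auto
    moreover have "la \<inter> {(k,l),(k+1,l),(k,l+1),(k+1,l+1)} = {}" using nla nla2 by auto
    moreover have "card {(k,l),(k+1,l),(k,l+1),(k+1,l+1)} = 4" by simp
    ultimately show ?thesis using card_Un_disjoint[OF fl, of "{(k,l),(k+1,l),(k,l+1),(k+1,l+1)}"] by simp
  qed
  have cm: "card mu = card la + 2" using card_add2[OF fl d1] mu by simp
  have cn: "card nu = card la + 2" using card_add2[OF fl d2] nu by simp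
  have "(k+1,l) \<in> nu" "(k+1,l) \<notin> mu" using nla unfolding mu nu hdom_def vdom_def by auto
  then have mn: "mu \<noteq> nu" by blast
  have r1: "rho \<noteq> mu" using e1 unfolding hdom_def by auto
  have r2: "rho \<noteq> nu" using e2 unfolding vdom_def by auto
  have ii: "(rho - mu) \<inter> (rho - nu) = {(k+1,l+1)}" unfolding e1 e2 hdom_def vdom_def by auto
  have b: "bck mu nu rho = (0, la)"
  proof -
    have "mu \<inter> nu - {(k,l)} = la" unfolding mu nu using nla unfolding hdom_def vdom_def by auto
    then show ?thesis using bck_one[OF mn r1 r2] ii by simp
  qed
  show ?thesis unfolding rho
    by (rule LF_I[OF pr s1 s2]) (use cr cm cn b e1 e2 g kl in \<open>simp_all add: vd_def\<close>)
qed

lemma case_eqv: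
  assumes p: "is_partition la" "is_partition mu"
    and mu: "mu = la \<union> vdom k l" and d: "la \<inter> vdom k l = {}" and kl: "1 \<le> k" "1 \<le> l"
  shows "LF 0 la mu mu (local_rule 0 la mu mu)"
proof -
  define c where "c = col_len mu (l+1)"
  have cc: "\<And>a. (a,l+1) \<in> mu \<longleftrightarrow> 1 \<le> a \<and> a \<le> c" using col_char[OF p(2)] c_def by blast
  have nla: "(k,l) \<notin> la" "(k+1,l) \<notin> la" using d unfolding vdom_def by auto
  have n1: "(k,l+1) \<notin> mu" using part_down[OF p(1), of k "l+1" k l] nla kl unfolding mu vdom_def by auto
  have ck: "c + 1 \<le> k" using cc[of k] n1 kl by auto
  have ne: "la \<noteq> mu" using nla mu unfolding vdom_def by auto
  have g: "mu - la = vdom k l" using mu d by auto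
  have te: "the_elem (snd ` vdom k l) = l" unfolding snd_vdom by simp
  have ci: "card (vdom k l \<inter> vdom k l) \<noteq> 1" by simp
  have vi: "vdom k l \<inter> vdom k l \<noteq> {}" unfolding vdom_def by simp
  define rho where "rho = mu \<union> vdom (c+1) (l+1)"
  have "local_rule 0 la mu mu = mu \<union> {(col_len mu (l+1) + 1, l+1), (col_len mu (l+1) + 2, l+1)}"
    using ci vi kl unfolding lr0_ne[OF ne ne] Let_def g te by (simp add: mu)
  then have rho: "local_rule 0 la mu mu = rho" unfolding rho_def c_def vdom_def by simp
  have nm: "(c+1,l+1) \<notin> mu" "(c+2,l+1) \<notin> mu" using cc by auto
  have e1: "rho - mu = vdom (c+1) (l+1)" unfolding rho_def using nm unfolding vdom_def by auto
  have pr: "is_partition rho"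
  proof (rule partI)
    show "finite rho" unfolding rho_def using part_fin[OF p(2)] by simp
    show "\<And>a b. (a,b) \<in> rho \<Longrightarrow> 1 \<le> a \<and> 1 \<le> b" unfolding rho_def vdom_def using part_pos[OF p(2)] by auto
    fix a b a' b' assume h: "(a,b) \<in> rho" "1 \<le> a'" "a' \<le> a" "1 \<le> b'" "b' \<le> b"
    show "(a',b') \<in> rho"
    proof (cases "(a,b) \<in> mu")
      case True then show ?thesis using part_down[OF p(2) True h(2-5)] unfolding rho_def by blast
    next
      case False
      then have ab: "b = l+1" "a \<le> c + 2" using h(1) unfolding rho_def vdom_def by auto
      have in1: "(k+1,l) \<in> mu" unfolding mu vdom_def by auto
      show ?thesis
      proof (cases "b' \<le> l")
        case True then show ?thesis using part_down[OF p(2) in1, of a' b'] h ab ck unfolding rho_def by auto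
      next
        case False
        then have "b' = l + 1" using h ab by auto
        then show ?thesis using cc[of a'] h ab unfolding rho_def vdom_def by (cases "a' \<le> c") auto
      qed
    qed
  qed
  have s1: "st mu rho" by (rule stI) (use e1 dom_vdom[of "c+1" "l+1"] in \<open>auto simp: rho_def\<close>)
  have fl: "finite mu" using part_fin[OF p(2)] .
  have cr: "card rho = card mu + 2" unfolding rho_def
    by (rule card_add2[OF fl]) (use nm in \<open>auto simp: vdom_def\<close>)
  have cm: "card mu = card la + 2" using card_add2[OF part_fin[OF p(1)] d] mu by simp
  have r1: "rho \<noteq> mu" using e1 unfolding vdom_def by auto
  have f1: "fst ` (rho - mu) \<noteq> {1}" unfolding e1 fst_vdom by (auto simp: doubleton_eq_iff)
  have f2: "snd ` (rho - mu) \<noteq> {1}" unfolding e1 snd_vdom using kl by auto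
  have f3: "vertical_domino (rho - mu)" unfolding e1 by simp
  have f4: "the_elem (snd ` (rho - mu)) = l + 1" unfolding e1 snd_vdom by simp
  have cl: "col_len mu l = k + 1"
  proof -
    have "(k+1,l) \<in> mu" unfolding mu vdom_def by auto
    moreover have "(k+2,l) \<notin> mu"
      using part_down[OF p(1), of "k+2" l k l] nla kl unfolding mu vdom_def by auto
    ultimately show ?thesis using col_char[OF p(2), of "k+1" l] col_char[OF p(2), of "k+2" l] by auto
  qed
  have b: "bck mu mu rho = (0, la)"
    using bck_v[OF r1 f1 f2 f3 f4] cl g mu d by (simp add: Diff_triv Un_Diff Int_commute)
  show ?thesis unfolding rho
    by (rule LF_I[OF pr s1 s1]) (use cr cm b e1 g kl in \<open>simp_all add: vd_def\<close>)
qed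

lemma case_eqh:
  assumes p: "is_partition la" "is_partition mu"
    and mu: "mu = la \<union> hdom k l" and d: "la \<inter> hdom k l = {}" and kl: "1 \<le> k" "1 \<le> l"
  shows "LF 0 la mu mu (local_rule 0 la mu mu)"
proof -
  define c where "c = row_len mu (k+1)"
  have cc: "\<And>a. (k+1,a) \<in> mu \<longleftrightarrow> 1 \<le> a \<and> a \<le> c" using row_char[OF p(2)] c_def by blast
  have nla: "(k,l) \<notin> la" "(k,l+1) \<notin> la" using d unfolding hdom_def by auto
  have n1: "(k+1,l) \<notin> mu" using part_down[OF p(1), of "k+1" l k l] nla kl unfolding mu hdom_def by auto
  have ck: "c + 1 \<le> l" using cc[of l] n1 kl by auto
  have ne: "la \<noteq> mu" using nla mu unfolding hdom_def by auto
  have g: "mu - la = hdom k l" using mu d by auto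
  have te: "the_elem (fst ` hdom k l) = k" unfolding fst_hdom by simp
  have ci: "card (hdom k l \<inter> hdom k l) \<noteq> 1" by simp
  have vi: "hdom k l \<inter> hdom k l \<noteq> {}" unfolding hdom_def by simp
  define rho where "rho = mu \<union> hdom (k+1) (c+1)"
  have "local_rule 0 la mu mu = mu \<union> {(k+1, row_len mu (k+1) + 1), (k+1, row_len mu (k+1) + 2)}"
    using ci vi kl unfolding lr0_ne[OF ne ne] Let_def g te by (simp add: mu)
  then have rho: "local_rule 0 la mu mu = rho" unfolding rho_def c_def hdom_def by simp
  have nm: "(k+1,c+1) \<notin> mu" "(k+1,c+2) \<notin> mu" using cc by auto
  have e1: "rho - mu = hdom (k+1) (c+1)" unfolding rho_def using nm unfolding hdom_def by auto
  have pr: "is_partition rho"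
  proof (rule partI)
    show "finite rho" unfolding rho_def using part_fin[OF p(2)] by simp
    show "\<And>a b. (a,b) \<in> rho \<Longrightarrow> 1 \<le> a \<and> 1 \<le> b" unfolding rho_def hdom_def using part_pos[OF p(2)] by auto
    fix a b a' b' assume h: "(a,b) \<in> rho" "1 \<le> a'" "a' \<le> a" "1 \<le> b'" "b' \<le> b"
    show "(a',b') \<in> rho"
    proof (cases "(a,b) \<in> mu")
      case True then show ?thesis using part_down[OF p(2) True h(2-5)] unfolding rho_def by blast
    next
      case False
      then have ab: "a = k+1" "b \<le> c + 2" using h(1) unfolding rho_def hdom_def by auto
      have in1: "(k,l+1) \<in> mu" unfolding mu hdom_def by auto
      show ?thesis
      proof (cases "a' \<le> k")
        case True then show ?thesis using part_down[OF p(2) in1, of a' b'] h ab ck unfolding rho_def by auto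
      next
        case False
        then have "a' = k + 1" using h ab by auto
        then show ?thesis using cc[of b'] h ab unfolding rho_def hdom_def by (cases "b' \<le> c") auto
      qed
    qed
  qed
  have s1: "st mu rho" by (rule stI) (use e1 dom_hdom[of "k+1" "c+1"] kl in \<open>auto simp: rho_def\<close>)
  have fl: "finite mu" using part_fin[OF p(2)] .
  have cr: "card rho = card mu + 2" unfolding rho_def
    by (rule card_add2[OF fl]) (use nm in \<open>auto simp: hdom_def\<close>)
  have cm: "card mu = card la + 2" using card_add2[OF part_fin[OF p(1)] d] mu by simp
  have r1: "rho \<noteq> mu" using e1 unfolding hdom_def by auto
  have f1: "fst ` (rho - mu) \<noteq> {1}" unfolding e1 fst_hdom using kl by auto
  have f2: "snd ` (rho - mu) \<noteq> {1}" unfolding e1 snd_hdom by (auto simp: doubleton_eq_iff)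
  have f3: "\<not> vertical_domino (rho - mu)" unfolding e1 by simp
  have f4: "the_elem (fst ` (rho - mu)) = k + 1" unfolding e1 fst_hdom by simp
  have cl: "row_len mu k = l + 1"
  proof -
    have "(k,l+1) \<in> mu" unfolding mu hdom_def by auto
    moreover have "(k,l+2) \<notin> mu"
      using part_down[OF p(1), of k "l+2" k l] nla kl unfolding mu hdom_def by auto
    ultimately show ?thesis using row_char[OF p(2), of k "l+1"] row_char[OF p(2), of k "l+2"] by auto
  qed
  have b: "bck mu mu rho = (0, la)"
    using bck_h[OF r1 f1 f2 f3 f4] cl g mu d by (simp add: Diff_triv Un_Diff Int_commute)
  show ?thesis unfolding rho
    by (rule LF_I[OF pr s1 s1]) (use cr cm b e1 g kl in \<open>simp_all add: vd_def\<close>)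
qed


lemma lr_sym: assumes ne: "la \<noteq> mu" "la \<noteq> nu" and c: "card ((nu - la) \<inter> (mu - la)) = 1"
  shows "local_rule 0 la mu nu = local_rule 0 la nu mu"
proof -
  have c2: "card ((mu - la) \<inter> (nu - la)) = 1" using c by (simp add: Int_commute)
  have n1: "(nu - la) \<inter> (mu - la) \<noteq> {}" using c by auto
  have n2: "(mu - la) \<inter> (nu - la) \<noteq> {}" using c2 by auto
  show ?thesis unfolding lr0_ne[OF ne] lr0_ne[OF ne(2,1)] Let_def
    using c c2 n1 n2 by (simp add: Int_commute) blast
qed

lemma bck_sym: "mu \<noteq> nu \<Longrightarrow> bck mu nu rho = bck nu mu rho"
  unfolding bck_def by (auto simp: Int_commute)

lemma LF_sym: "LF 0 la mu nu rho \<Longrightarrow> mu \<noteq> nu \<Longrightarrow> LF 0 la nu mu rho"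
  unfolding LF_def using bck_sym by (metis add.commute)

lemma LF_main:
  assumes v: "valid m la mu nu"
  shows "LF m la mu nu (local_rule m la mu nu)"
proof -
  have p: "is_partition la" "is_partition mu" "is_partition nu" and s: "st la mu" "st la nu"
    and m: "m \<in> {-1,0,1}" and mz: "m \<noteq> 0 \<longrightarrow> mu = la \<and> nu = la"
    using v unfolding valid_def by auto
  have sub: "la \<subseteq> mu" "la \<subseteq> nu" using s unfolding st_def by auto
  consider "m = 1" | "m = -1" | "m = 0" using m by auto
  then show ?thesis
  proof cases
    case 1 then show ?thesis using case_p1[OF p(1)] mz by simp
  next
    case 2 then show ?thesis using case_m1[OF p(1)] mz by simp
  next
    case 3
    show ?thesis
    proof (cases "la = mu")
      case True then show ?thesis using case_eq_mu[OF p(1,3) s(2)] 3 by simp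
    next
      case nm: False
      show ?thesis
      proof (cases "la = nu")
        case True then show ?thesis using case_eq_nu[OF p(1,2) s(1) nm] 3 by simp
      next
        case nn: False
        have dm: "is_domino (mu - la)" and dn: "is_domino (nu - la)" using s nm nn unfolding st_def by auto
        have eqm: "mu = la \<union> (mu - la)" and eqn: "nu = la \<union> (nu - la)" using sub by auto
        have djm: "la \<inter> (mu - la) = {}" and djn: "la \<inter> (nu - la) = {}" by auto
        show ?thesis
        proof (cases "(nu - la) \<inter> (mu - la) = {}")
          case True then show ?thesis using case_disj[OF p s nm nn] 3 by simp
        next
          case ni: False
          show ?thesis
          proof (cases "nu - la = mu - la")
            case True
            then have mn: "mu = nu" using eqm eqn by metis
            show ?thesis
            proof (rule domino_cases[OF dm])
              fix a b assume ab: "1 \<le> a" "1 \<le> b" "mu - la = vdom a b"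
              show ?thesis using case_eqv[OF p(1,2) _ _ ab(1,2), of] eqm djm ab(3) mn 3 by metis
            next
              fix a b assume ab: "1 \<le> a" "1 \<le> b" "mu - la = hdom a b"
              show ?thesis using case_eqh[OF p(1,2) _ _ ab(1,2), of] eqm djm ab(3) mn 3 by metis
            qed
          next
            case False
            have pn: "is_partition (la \<union> (nu - la))" and pm: "is_partition (la \<union> (mu - la))"
              using p eqm eqn by metis+
            obtain k l where kl: "1 \<le> k" "1 \<le> l"
              "(nu - la = vdom k l \<and> mu - la = hdom k l) \<or> (nu - la = hdom k l \<and> mu - la = vdom k l)"
              using classify_fwd[OF pn pm djn djm dn dm False ni] by blast
            from kl(3) show ?thesis
            proof
              assume h: "nu - la = vdom k l \<and> mu - la = hdom k l"
              show ?thesis using case_one[OF p, of k l] h eqm eqn djm djn kl(1,2) 3 by metis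
            next
              assume h: "nu - la = hdom k l \<and> mu - la = vdom k l"
              have "LF 0 la nu mu (local_rule 0 la nu mu)"
                using case_one[OF p(1,3,2), of k l] h eqm eqn djm djn kl(1,2) by metis
              moreover have "nu \<noteq> mu" using False eqm eqn by metis
              moreover have "card ((nu - la) \<inter> (mu - la)) = 1"
                using h unfolding vdom_def hdom_def by (simp add: insert_commute Int_insert_left)
              ultimately show ?thesis using LF_sym lr_sym[OF nm nn] 3 by metis
            qed
          qed
        qed
      qed
    qed
  qed
qed


lemma lr_one_val:
  assumes mu: "mu = la \<union> hdom k l" and nu: "nu = la \<union> vdom k l"
    and d1: "la \<inter> hdom k l = {}" and d2: "la \<inter> vdom k l = {}"
  shows "local_rule 0 la mu nu = mu \<union> nu \<union> {(k+1,l+1)}"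
proof -
  have nla: "(k,l) \<notin> la" "(k+1,l) \<notin> la" "(k,l+1) \<notin> la" using d1 d2 unfolding hdom_def vdom_def by auto
  have ne: "la \<noteq> mu" "la \<noteq> nu" using nla mu nu unfolding hdom_def vdom_def by auto
  have g: "nu - la = vdom k l" "mu - la = hdom k l" using mu nu d1 d2 by auto
  have gi: "vdom k l \<inter> hdom k l = {(k,l)}" unfolding vdom_def hdom_def by auto
  have "local_rule 0 la mu nu = la \<union> vdom k l \<union> hdom k l \<union> (\<lambda>(a,b). (a+1,b+1)) ` {(k,l)}"
    unfolding lr0_ne[OF ne] Let_def g gi by simp
  then show ?thesis unfolding mu nu by auto
qed

lemma lr_eqv_val:
  assumes mu: "mu = la \<union> vdom k l" and d: "la \<inter> vdom k l = {}" and kl: "1 \<le> k" "1 \<le> l"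
  shows "local_rule 0 la mu mu = mu \<union> vdom (col_len mu (l+1) + 1) (l+1)"
proof -
  have nla: "(k,l) \<notin> la" using d unfolding vdom_def by auto
  have ne: "la \<noteq> mu" using nla mu unfolding vdom_def by auto
  have g: "mu - la = vdom k l" using mu d by auto
  have te: "the_elem (snd ` vdom k l) = l" unfolding snd_vdom by simp
  have ci: "card (vdom k l \<inter> vdom k l) \<noteq> 1" by simp
  have vi: "vdom k l \<inter> vdom k l \<noteq> {}" unfolding vdom_def by simp
  have "local_rule 0 la mu mu = mu \<union> {(col_len mu (l+1) + 1, l+1), (col_len mu (l+1) + 2, l+1)}"
    using ci vi kl unfolding lr0_ne[OF ne ne] Let_def g te by (simp add: mu)
  then show ?thesis unfolding vdom_def by simp
qed

lemma lr_eqh_val: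
  assumes mu: "mu = la \<union> hdom k l" and d: "la \<inter> hdom k l = {}"
  shows "local_rule 0 la mu mu = mu \<union> hdom (k+1) (row_len mu (k+1) + 1)"
proof -
  have nla: "(k,l) \<notin> la" using d unfolding hdom_def by auto
  have ne: "la \<noteq> mu" using nla mu unfolding hdom_def by auto
  have g: "mu - la = hdom k l" using mu d by auto
  have te: "the_elem (fst ` hdom k l) = k" unfolding fst_hdom by simp
  have ci: "card (hdom k l \<inter> hdom k l) \<noteq> 1" by simp
  have vi: "hdom k l \<inter> hdom k l \<noteq> {}" unfolding hdom_def by simp
  have "local_rule 0 la mu mu = mu \<union> {(k+1, row_len mu (k+1) + 1), (k+1, row_len mu (k+1) + 2)}"
    using ci vi unfolding lr0_ne[OF ne ne] Let_def g te by (simp add: mu)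
  then show ?thesis unfolding hdom_def by simp
qed

lemma first_free_row:
  assumes p: "is_partition mu" and pr: "is_partition (mu \<union> hdom a b)" and d: "mu \<inter> hdom a b = {}" and ab: "1 \<le> a" "1 \<le> b"
  shows "b = row_len mu a + 1"
proof -
  have "(a,b) \<notin> mu" using d unfolding hdom_def by auto
  then have "\<not> b \<le> row_len mu a" using row_char[OF p, of a b] ab by auto
  moreover have "b - 1 \<le> row_len mu a"
  proof (cases "b = 1")
    case False
    have "(a,b-1) \<in> mu \<union> hdom a b" using part_down[OF pr, of a b a "b-1"] ab False unfolding hdom_def by auto
    then have "(a,b-1) \<in> mu" unfolding hdom_def using False ab by auto
    then show ?thesis using row_char[OF p, of a "b-1"] by auto
  qed simp
  ultimately show ?thesis by simp
qed

lemma first_free_col: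
  assumes p: "is_partition mu" and pr: "is_partition (mu \<union> vdom a b)" and d: "mu \<inter> vdom a b = {}" and ab: "1 \<le> a" "1 \<le> b"
  shows "a = col_len mu b + 1"
proof -
  have "(a,b) \<notin> mu" using d unfolding vdom_def by auto
  then have "\<not> a \<le> col_len mu b" using col_char[OF p, of a b] ab by auto
  moreover have "a - 1 \<le> col_len mu b"
  proof (cases "a = 1")
    case False
    have "(a-1,b) \<in> mu \<union> vdom a b" using part_down[OF pr, of a b "a-1" b] ab False unfolding vdom_def by auto
    then have "(a-1,b) \<in> mu" unfolding vdom_def using False ab by auto
    then show ?thesis using col_char[OF p, of "a-1" b] by auto
  qed simp
  ultimately show ?thesis by simp
qed

lemma validI: "is_partition la \<Longrightarrow> is_partition mu \<Longrightarrow> is_partition nu \<Longrightarrow> st la mu \<Longrightarrow> st la nu \<Longrightarrow>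
  m \<in> {-1,0,1} \<Longrightarrow> (m \<noteq> 0 \<Longrightarrow> mu = la \<and> nu = la) \<Longrightarrow> valid m la mu nu"
  unfolding valid_def by blast

lemma ex_same:
  assumes p: "is_partition mu" "is_partition rho" and s: "st mu rho"
  shows "\<exists>m la. valid m la mu mu \<and> local_rule m la mu mu = rho"
proof (cases "rho = mu")
  case True
  have "local_rule 0 mu mu mu = mu" unfolding local_rule_def by simp
  then show ?thesis using p s True
    by (intro exI[of _ 0] exI[of _ mu]) (auto intro!: validI)
next
  case False
  then have dd: "is_domino (rho - mu)" and sub: "mu \<subseteq> rho" using s unfolding st_def by auto
  have er: "mu \<union> (rho - mu) = rho" using sub by blast
  have dj: "mu \<inter> (rho - mu) = {}" by blast
  have pr': "is_partition (mu \<union> (rho - mu))" using p(2) er by metis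
  show ?thesis
  proof (rule domino_cases[OF dd])
    fix a b assume ab: "1 \<le> a" "1 \<le> b" and h: "rho - mu = hdom a b"
    have er2: "rho = mu \<union> hdom a b" using sub h by blast
    show ?thesis
    proof (cases "a = 1")
      case True
      have b: "b = row_len mu 1 + 1" using first_free_row[OF p(1) pr'[unfolded h] dj[unfolded h] ab] True by simp
      have "local_rule 1 mu mu mu = rho" unfolding local_rule_def using er2 b True by (simp add: hdom_def)
      then show ?thesis using p by (intro exI[of _ 1] exI[of _ mu]) (auto intro!: validI)
    next
      case False
      define k where "k = a - 1"
      have k: "a = k + 1" "1 \<le> k" using False ab k_def by auto
      have bb: "b = row_len mu a + 1" using first_free_row[OF p(1) pr'[unfolded h] dj[unfolded h] ab] .
      define L where "L = row_len mu k"
      have rk: "\<And>x. (k,x) \<in> mu \<longleftrightarrow> 1 \<le> x \<and> x \<le> L" using row_char[OF p(1)] L_def by blast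
      have "(a, b+1) \<in> rho" using h unfolding hdom_def by auto
      then have "(k, b+1) \<in> rho" using part_down[OF p(2), of a "b+1" k "b+1"] k by auto
      moreover have "(k, b+1) \<notin> rho - mu" unfolding h hdom_def using k by simp
      ultimately have "(k, b+1) \<in> mu" by blast
      then have Lb: "b + 1 \<le> L" using rk[of "b+1"] by simp
      define la where "la = mu - hdom k (L-1)"
      have hs: "hdom k (L-1) \<subseteq> mu" using rk[of L] rk[of "L-1"] Lb ab unfolding hdom_def by auto
      have emu: "mu = la \<union> hdom k (L-1)" and dla: "la \<inter> hdom k (L-1) = {}" using hs la_def by auto
      have pla: "is_partition la"
      proof (rule partI)
        show "finite la" using part_fin[OF p(1)] la_def by simp
        show "\<And>x y. (x,y) \<in> la \<Longrightarrow> 1 \<le> x \<and> 1 \<le> y" using part_pos[OF p(1)] la_def by blast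
        fix x y x' y' assume h1: "(x,y) \<in> la" "1 \<le> x'" "x' \<le> x" "1 \<le> y'" "y' \<le> y"
        have "(x',y') \<in> mu" using part_down[OF p(1), of x y x' y'] h1 la_def by auto
        moreover have "(x',y') \<notin> hdom k (L-1)"
        proof
          assume "(x',y') \<in> hdom k (L-1)"
          then have xk: "x' = k" "L - 1 \<le> y'" unfolding hdom_def by auto
          show False
          proof (cases "x = k")
            case True
            then have "y \<le> L" using rk[of y] h1 la_def by auto
            then have "(x,y) \<in> hdom k (L-1)" using True xk h1 unfolding hdom_def by auto
            then show False using h1 la_def by auto
          next
            case False
            then have "a \<le> x" using xk h1 k by auto
            moreover have "b \<le> y" using xk h1 Lb by auto
            ultimately have "(a,b) \<in> mu" using part_down[OF p(1), of x y a b] h1 la_def ab by auto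
            then show False using dj h unfolding hdom_def by auto
          qed
        qed
        ultimately show "(x',y') \<in> la" using la_def by blast
      qed
      have L1: "1 \<le> L - 1" using Lb ab by auto
      have rw: "row_len mu (k+1) = b - 1" using bb k by simp
      have "local_rule 0 la mu mu = mu \<union> hdom a b"
        using lr_eqh_val[OF emu dla] rw k ab by simp
      then have lr: "local_rule 0 la mu mu = rho" using er2 by simp
      have md: "mu - la = hdom k (L-1)" using emu dla by blast
      have st1: "st la mu" by (rule stI) (use emu md dom_hdom[OF k(2) L1] in auto)
      show ?thesis using pla p st1 lr by (intro exI[of _ 0] exI[of _ la]) (auto intro!: validI)
    qed
  next
    fix a b assume ab: "1 \<le> a" "1 \<le> b" and h: "rho - mu = vdom a b"
    have er2: "rho = mu \<union> vdom a b" using sub h by blast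
    show ?thesis
    proof (cases "b = 1")
      case True
      have b: "a = col_len mu 1 + 1" using first_free_col[OF p(1) pr'[unfolded h] dj[unfolded h] ab] True by simp
      have "local_rule (-1) mu mu mu = rho" unfolding local_rule_def using er2 b True by (simp add: vdom_def)
      then show ?thesis using p by (intro exI[of _ "-1"] exI[of _ mu]) (auto intro!: validI)
    next
      case False
      define k where "k = b - 1"
      have k: "b = k + 1" "1 \<le> k" using False ab k_def by auto
      have bb: "a = col_len mu b + 1" using first_free_col[OF p(1) pr'[unfolded h] dj[unfolded h] ab] .
      define L where "L = col_len mu k"
      have rk: "\<And>x. (x,k) \<in> mu \<longleftrightarrow> 1 \<le> x \<and> x \<le> L" using col_char[OF p(1)] L_def by blast
      have "(a+1, b) \<in> rho" using h unfolding vdom_def by auto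
      then have "(a+1, k) \<in> rho" using part_down[OF p(2), of "a+1" b "a+1" k] k by auto
      moreover have "(a+1, k) \<notin> rho - mu" unfolding h vdom_def using k by simp
      ultimately have "(a+1, k) \<in> mu" by blast
      then have Lb: "a + 1 \<le> L" using rk[of "a+1"] by simp
      define la where "la = mu - vdom (L-1) k"
      have hs: "vdom (L-1) k \<subseteq> mu" using rk[of L] rk[of "L-1"] Lb ab unfolding vdom_def by auto
      have emu: "mu = la \<union> vdom (L-1) k" and dla: "la \<inter> vdom (L-1) k = {}" using hs la_def by auto
      have pla: "is_partition la"
      proof (rule partI)
        show "finite la" using part_fin[OF p(1)] la_def by simp
        show "\<And>x y. (x,y) \<in> la \<Longrightarrow> 1 \<le> x \<and> 1 \<le> y" using part_pos[OF p(1)] la_def by blast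
        fix x y x' y' assume h1: "(x,y) \<in> la" "1 \<le> x'" "x' \<le> x" "1 \<le> y'" "y' \<le> y"
        have "(x',y') \<in> mu" using part_down[OF p(1), of x y x' y'] h1 la_def by auto
        moreover have "(x',y') \<notin> vdom (L-1) k"
        proof
          assume "(x',y') \<in> vdom (L-1) k"
          then have xk: "y' = k" "L - 1 \<le> x'" unfolding vdom_def by auto
          show False
          proof (cases "y = k")
            case True
            then have "x \<le> L" using rk[of x] h1 la_def by auto
            then have "(x,y) \<in> vdom (L-1) k" using True xk h1 unfolding vdom_def by auto
            then show False using h1 la_def by auto
          next
            case False
            then have "b \<le> y" using xk h1 k by auto
            moreover have "a \<le> x" using xk h1 Lb by auto
            ultimately have "(a,b) \<in> mu" using part_down[OF p(1), of x y a b] h1 la_def ab by auto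
            then show False using dj h unfolding vdom_def by auto
          qed
        qed
        ultimately show "(x',y') \<in> la" using la_def by blast
      qed
      have L1: "1 \<le> L - 1" using Lb ab by auto
      have rw: "col_len mu (k+1) = a - 1" using bb k by simp
      have "local_rule 0 la mu mu = mu \<union> vdom a b"
        using lr_eqv_val[OF emu dla L1 k(2)] rw k ab by simp
      then have lr: "local_rule 0 la mu mu = rho" using er2 by simp
      have md: "mu - la = vdom (L-1) k" using emu dla by blast
      have st1: "st la mu" by (rule stI) (use emu md dom_vdom[OF L1 k(2)] in auto)
      show ?thesis using pla p st1 lr by (intro exI[of _ 0] exI[of _ la]) (auto intro!: validI)
    qed
  qed
qed


lemma valid_sym: "valid 0 la mu nu \<Longrightarrow> valid 0 la nu mu" unfolding valid_def by auto

lemma ex_one: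
  assumes p: "is_partition mu" "is_partition nu" "is_partition rho" and sub: "mu \<subseteq> rho" "nu \<subseteq> rho"
    and h1: "rho - mu = hdom (k+1) l" and h2: "rho - nu = vdom k (l+1)" and kl: "1 \<le> k" "1 \<le> l"
  shows "\<exists>la. valid 0 la mu nu \<and> local_rule 0 la mu nu = rho \<and> local_rule 0 la nu mu = rho"
proof -
  have c1: "(k+1,l) \<in> rho" "(k+1,l+1) \<in> rho" "(k+1,l) \<notin> mu" "(k+1,l+1) \<notin> mu" using h1 unfolding hdom_def by auto
  have c2: "(k,l+1) \<in> rho" "(k,l+1) \<notin> nu" "(k+1,l+1) \<notin> nu" using h2 unfolding vdom_def by auto
  have c3: "(k,l) \<in> rho" using part_down[OF p(3) c1(2), of k l] kl by auto
  have c4: "(k,l) \<notin> rho - mu" "(k,l) \<notin> rho - nu" "(k,l+1) \<notin> rho - mu" "(k+1,l) \<notin> rho - nu"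
    unfolding h1 h2 hdom_def vdom_def by auto
  have i1: "(k,l) \<in> mu" "(k,l) \<in> nu" "(k,l+1) \<in> mu" "(k+1,l) \<in> nu" using c1 c2 c3 c4 by auto
  define la where "la = mu \<inter> nu - {(k,l)}"
  have emu: "mu = la \<union> hdom k l"
  proof
    show "la \<union> hdom k l \<subseteq> mu" unfolding la_def hdom_def using i1 by auto
    show "mu \<subseteq> la \<union> hdom k l"
    proof
      fix x assume x: "x \<in> mu"
      show "x \<in> la \<union> hdom k l"
      proof (cases "x \<in> nu")
        case True then show ?thesis unfolding la_def hdom_def using x by auto
      next
        case False
        then have "x \<in> rho - nu" using x sub by auto
        then have "x = (k,l+1) \<or> x = (k+1,l+1)" unfolding h2 vdom_def by auto
        then show ?thesis using x c1 unfolding hdom_def by auto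
      qed
    qed
  qed
  have enu: "nu = la \<union> vdom k l"
  proof
    show "la \<union> vdom k l \<subseteq> nu" unfolding la_def vdom_def using i1 by auto
    show "nu \<subseteq> la \<union> vdom k l"
    proof
      fix x assume x: "x \<in> nu"
      show "x \<in> la \<union> vdom k l"
      proof (cases "x \<in> mu")
        case True then show ?thesis unfolding la_def vdom_def using x by auto
      next
        case False
        then have "x \<in> rho - mu" using x sub by auto
        then have "x = (k+1,l) \<or> x = (k+1,l+1)" unfolding h1 hdom_def by auto
        then show ?thesis using x c2 unfolding vdom_def by auto
      qed
    qed
  qed
  have d1: "la \<inter> hdom k l = {}" unfolding la_def hdom_def using c2 by auto
  have d2: "la \<inter> vdom k l = {}" unfolding la_def vdom_def using c1 by auto
  have pmn: "is_partition (mu \<inter> nu)" by (rule part_Int[OF p(1,2)])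
  have pla: "is_partition la"
  proof (rule partI)
    show "finite la" unfolding la_def using part_fin[OF p(1)] by simp
    show "\<And>x y. (x,y) \<in> la \<Longrightarrow> 1 \<le> x \<and> 1 \<le> y" unfolding la_def using part_pos[OF p(1)] by blast
    fix x y x' y' assume hh: "(x,y) \<in> la" "1 \<le> x'" "x' \<le> x" "1 \<le> y'" "y' \<le> y"
    have m: "(x',y') \<in> mu \<inter> nu" using part_down[OF pmn, of x y x' y'] hh unfolding la_def by auto
    show "(x',y') \<in> la"
    proof (rule ccontr)
      assume "(x',y') \<notin> la"
      then have e: "x' = k" "y' = l" using m unfolding la_def by auto
      have ne: "(x,y) \<noteq> (k,l)" using hh unfolding la_def by auto
      show False
      proof (cases "k + 1 \<le> x")
        case True
        then have "(k+1,l) \<in> mu \<inter> nu" using part_down[OF pmn, of x y "k+1" l] hh e kl unfolding la_def by auto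
        then show False using c1 by auto
      next
        case False
        then have "x = k" using e hh by auto
        then have "l + 1 \<le> y" using ne e hh by auto
        then have "(k,l+1) \<in> mu \<inter> nu" using part_down[OF pmn, of x y k "l+1"] hh e kl unfolding la_def by auto
        then show False using c2 by auto
      qed
    qed
  qed
  have lr1: "local_rule 0 la mu nu = rho"
  proof -
    have "local_rule 0 la mu nu = mu \<union> nu \<union> {(k+1,l+1)}" by (rule lr_one_val[OF emu enu d1 d2])
    also have "\<dots> = rho" using sub c1 i1 h1 h2 unfolding hdom_def vdom_def by auto
    finally show ?thesis .
  qed
  have md: "mu - la = hdom k l" "nu - la = vdom k l" using emu enu d1 d2 by auto
  have ne: "la \<noteq> mu" "la \<noteq> nu" using md unfolding hdom_def vdom_def by auto
  have cc: "card ((nu - la) \<inter> (mu - la)) = 1" unfolding md vdom_def hdom_def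
    by (simp add: insert_commute Int_insert_left)
  have lr2: "local_rule 0 la nu mu = rho" using lr1 lr_sym[OF ne cc] by simp
  have v: "valid 0 la mu nu"
    by (rule validI[OF pla p(1,2)]) (use md dom_hdom[OF kl] dom_vdom[OF kl] emu enu in \<open>auto intro!: stI\<close>)
  show ?thesis using v lr1 lr2 by blast
qed

lemma ex_diff:
  assumes p: "is_partition mu" "is_partition nu" "is_partition rho" and s: "st mu rho" "st nu rho"
    and mn: "mu \<noteq> nu"
  shows "\<exists>m la. valid m la mu nu \<and> local_rule m la mu nu = rho"
proof -
  have sub: "mu \<subseteq> rho" "nu \<subseteq> rho" using s unfolding st_def by auto
  show ?thesis
  proof (cases "rho = mu")
    case True
    have "local_rule 0 nu mu nu = mu" unfolding local_rule_def using mn by auto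
    moreover have "valid 0 nu mu nu" using p s True by (auto intro!: validI)
    ultimately show ?thesis using True by blast
  next
    case rm: False
    show ?thesis
    proof (cases "rho = nu")
      case True
      have "local_rule 0 mu mu nu = nu" unfolding local_rule_def by auto
      moreover have "valid 0 mu mu nu" using p s True by (auto intro!: validI)
      ultimately show ?thesis using True by blast
    next
      case rn: False
      have dd: "is_domino (rho - mu)" "is_domino (rho - nu)" using s rm rn unfolding st_def by auto
      have emu: "mu = rho - (rho - mu)" and enu: "nu = rho - (rho - nu)" using sub by auto
      have ne: "rho - mu \<noteq> rho - nu" using emu enu mn by metis
      show ?thesis
      proof (cases "(rho - mu) \<inter> (rho - nu) = {}")
        case True
        define la where "la = mu \<inter> nu"
        have m1: "mu - la = rho - nu" "nu - la = rho - mu" unfolding la_def using True sub by auto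
        have pla: "is_partition la" unfolding la_def by (rule part_Int[OF p(1,2)])
        have "rho - nu \<noteq> {}" "rho - mu \<noteq> {}" using dd domino_card by (metis card.empty zero_neq_numeral)+
        then have ne2: "la \<noteq> mu" "la \<noteq> nu" using m1 by auto
        have "local_rule 0 la mu nu = la \<union> (rho - mu) \<union> (rho - nu)"
          unfolding lr0_ne[OF ne2] Let_def m1 using True by simp
        also have "\<dots> = rho" unfolding la_def using sub by auto
        finally have lr: "local_rule 0 la mu nu = rho" .
        have v: "valid 0 la mu nu"
          by (rule validI[OF pla p(1,2)]) (use m1 dd la_def in \<open>auto intro!: stI\<close>)
        show ?thesis using v lr by blast
      next
        case False
        have p1: "is_partition (rho - (rho - mu))" and p2: "is_partition (rho - (rho - nu))"
          using p emu enu by metis+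
        obtain k l where kl: "1 \<le> k" "1 \<le> l"
          "(rho - mu = vdom k (l+1) \<and> rho - nu = hdom (k+1) l) \<or> (rho - mu = hdom (k+1) l \<and> rho - nu = vdom k (l+1))"
          using classify_bwd[OF p1 p2 _ _ dd ne False] by blast
        from kl(3) show ?thesis
        proof
          assume h: "rho - mu = vdom k (l+1) \<and> rho - nu = hdom (k+1) l"
          obtain la where "valid 0 la nu mu" "local_rule 0 la mu nu = rho"
            using ex_one[OF p(2,1,3) sub(2,1) _ _ kl(1,2)] h by blast
          then show ?thesis using valid_sym by blast
        next
          assume h: "rho - mu = hdom (k+1) l \<and> rho - nu = vdom k (l+1)"
          then show ?thesis using ex_one[OF p sub _ _ kl(1,2)] by blast
        qed
      qed
    qed
  qed
qed

lemma ex_back: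
  assumes p: "is_partition mu" "is_partition nu" "is_partition rho" and s: "st mu rho" "st nu rho"
  shows "\<exists>m la. valid m la mu nu \<and> local_rule m la mu nu = rho"
proof (cases "mu = nu")
  case True then show ?thesis using ex_same[OF p(1,3) s(1)] by simp
next
  case False then show ?thesis using ex_diff[OF p s] by blast
qed

lemma bck_props:
  assumes p: "is_partition mu" "is_partition nu" "is_partition rho" and s: "st mu rho" "st nu rho"
  shows "valid (fst (bck mu nu rho)) (snd (bck mu nu rho)) mu nu \<and>
         local_rule (fst (bck mu nu rho)) (snd (bck mu nu rho)) mu nu = rho"
proof -
  obtain m la where v: "valid m la mu nu" and r: "local_rule m la mu nu = rho" using ex_back[OF p s] by blast
  have "bck mu nu rho = (m, la)" using LF_main[OF v] r unfolding LF_def by simp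
  then show ?thesis using v r by simp
qed


lemma SDT_card:
  assumes "is_SDT r la D" shows "\<And>i. i < length D \<Longrightarrow> card (D!i) = card (delta r) + 2*i"
proof -
  fix i assume "i < length D"
  then show "card (D!i) = card (delta r) + 2*i"
  proof (induction i)
    case 0
    have "D!0 = delta r" using assms unfolding is_SDT_def by (metis hd_conv_nth)
    then show ?case by simp
  next
    case (Suc i)
    have s: "D!i \<subseteq> D!(i+1)" and d: "is_domino (D!(i+1) - D!i)" using assms Suc.prems unfolding is_SDT_def by auto
    have f: "finite (D!(i+1))" using assms Suc.prems part_fin unfolding is_SDT_def by auto
    have "card (D!(i+1)) = card (D!i) + card (D!(i+1) - D!i)"
      using card_Diff_subset[OF finite_subset[OF s f] s] card_mono[OF f s] by simp
    then show ?case using Suc domino_card[OF d] by simp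
  qed
qed

lemma SDT_facts:
  assumes sd: "is_SDT r la D" and c: "card la = card (delta r) + 2*n"
  shows "length D = n+1" "D!0 = delta r" "D!n = la" "\<And>i. i \<le> n \<Longrightarrow> is_partition (D!i)"
    "\<And>i. i < n \<Longrightarrow> st (D!i) (D!(i+1))" "\<And>i. i < n \<Longrightarrow> card (D!(i+1)) = card (D!i) + 2"
proof -
  have ne: "D \<noteq> []" and h: "hd D = delta r" and l: "last D = la" using sd unfolding is_SDT_def by auto
  have "card la = card (delta r) + 2 * (length D - 1)"
    using SDT_card[OF sd, of "length D - 1"] ne l by (simp add: last_conv_nth)
  then show len: "length D = n+1" using c ne by (cases D) auto
  show "D!0 = delta r" using h ne by (simp add: hd_conv_nth)
  show "D!n = la" using l len ne by (simp add: last_conv_nth)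
  show "\<And>i. i \<le> n \<Longrightarrow> is_partition (D!i)" using sd len unfolding is_SDT_def by auto
  show "\<And>i. i < n \<Longrightarrow> st (D!i) (D!(i+1))" using sd len unfolding is_SDT_def st_def by auto
  show "\<And>i. i < n \<Longrightarrow> card (D!(i+1)) = card (D!i) + 2" using SDT_card[OF sd] len by simp
qed

lemma SDT_rtrancl:
  assumes sd: "is_SDT r la D" shows "(la, delta r) \<in> domino_removal\<^sup>*"
proof -
  have "\<And>i. i < length D \<Longrightarrow> (D!i, delta r) \<in> domino_removal\<^sup>*"
  proof -
    fix i assume "i < length D"
    then show "(D!i, delta r) \<in> domino_removal\<^sup>*"
    proof (induction i)
      case 0
      have "D!0 = delta r" using sd unfolding is_SDT_def by (metis hd_conv_nth)
      then show ?case by simp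
    next
      case (Suc i)
      have "(D!(Suc i), D!i) \<in> domino_removal" using sd Suc.prems unfolding is_SDT_def domino_removal_def by auto
      then show ?case using Suc by (meson converse_rtrancl_into_rtrancl Suc_lessD)
    qed
  qed
  moreover have "D \<noteq> []" "last D = la" using sd unfolding is_SDT_def by auto
  ultimately show ?thesis by (metis last_conv_nth diff_less length_greater_0_conv zero_less_one)
qed

lemma SDT_Pr:
  assumes sd: "is_SDT r la D" and p: "is_partition la" and c: "card la = card (delta r) + 2*n"
  shows "la \<in> Pr r n"
  unfolding Pr_def using two_core_eq[OF p SDT_rtrancl[OF sd]] p c by simp

lemma card_lessSuc: "card {a. a < Suc i \<and> P a} = card {a. a < i \<and> P a} + (if P i then 1 else 0)"
proof -
  have "{a. a < Suc i \<and> P a} = {a. a < i \<and> P a} \<union> (if P i then {i} else {})" by (auto simp: less_Suc_eq)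
  moreover have "finite {a. a < i \<and> P a}" by simp
  ultimately show ?thesis by (auto simp: card_insert_if)
qed

lemma Bn_len: "w \<in> Bn n \<Longrightarrow> length w = n" unfolding Bn_def by simp

lemma Bn_val: "w \<in> Bn n \<Longrightarrow> i < n \<Longrightarrow> 1 \<le> letter_val (w!i) \<and> letter_val (w!i) \<le> n"
  unfolding Bn_def by (auto simp: subset_iff set_conv_nth)

lemma Bn_count: "w \<in> Bn n \<Longrightarrow> 1 \<le> k \<Longrightarrow> k \<le> n \<Longrightarrow> card {i. i < n \<and> letter_val (w!i) = k} = 1"
  unfolding Bn_def by (auto simp: length_filter_conv_card)

lemma Bn_inj: assumes w: "w \<in> Bn n" and ij: "i < n" "j < n" and e: "letter_val (w!i) = letter_val (w!j)"
  shows "i = j"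
proof (rule ccontr)
  assume ne: "i \<noteq> j"
  let ?k = "letter_val (w!i)"
  have "{i,j} \<subseteq> {a. a < n \<and> letter_val (w!a) = ?k}" using ij e by auto
  then have "card {i,j} \<le> card {a. a < n \<and> letter_val (w!a) = ?k}" by (intro card_mono) auto
  then show False using Bn_count[OF w] Bn_val[OF w ij(1)] ne by simp
qed

lemma Bn_bij: assumes w: "w \<in> Bn n" shows "bij_betw (\<lambda>i. letter_val (w!i)) {..<n} {1..n}"
proof -
  have inj: "inj_on (\<lambda>i. letter_val (w!i)) {..<n}" using Bn_inj[OF w] by (auto simp: inj_on_def)
  have sub: "(\<lambda>i. letter_val (w!i)) ` {..<n} \<subseteq> {1..n}" using Bn_val[OF w] by auto
  have "card ((\<lambda>i. letter_val (w!i)) ` {..<n}) = n" using card_image[OF inj] by simp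
  then have "(\<lambda>i. letter_val (w!i)) ` {..<n} = {1..n}" using sub by (intro card_subset_eq) auto
  then show ?thesis using inj unfolding bij_betw_def by simp
qed

definition NN :: "letter list \<Rightarrow> nat \<Rightarrow> nat \<Rightarrow> nat" where
  "NN w i j = card {a. a < i \<and> letter_val (w!a) \<le> j}"

lemma NN_Suc: "NN w (Suc i) j = NN w i j + (if letter_val (w!i) \<le> j then 1 else 0)"
  unfolding NN_def by (rule card_lessSuc)

lemma NN_0[simp]: "NN w 0 j = 0" unfolding NN_def by simp

lemma NN_row: assumes w: "w \<in> Bn n" and j: "j \<le> n" shows "NN w n j = j"
proof -
  have "{a. a < n \<and> letter_val (w!a) \<le> j} = {..<n} \<inter> (\<lambda>i. letter_val (w!i)) -` {1..j}"
    using Bn_val[OF w] by auto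
  have b: "bij_betw (\<lambda>i. letter_val (w!i)) {a. a < n \<and> letter_val (w!a) \<le> j} {1..j}"
  proof -
    have bb: "bij_betw (\<lambda>i. letter_val (w!i)) {..<n} {1..n}" by (rule Bn_bij[OF w])
    have "bij_betw (\<lambda>i. letter_val (w!i)) {a \<in> {..<n}. letter_val (w!a) \<in> {1..j}} ((\<lambda>i. letter_val (w!i)) ` {a \<in> {..<n}. letter_val (w!a) \<in> {1..j}})"
      using bb unfolding bij_betw_def by (auto intro: inj_on_subset)
    moreover have "{a \<in> {..<n}. letter_val (w!a) \<in> {1..j}} = {a. a < n \<and> letter_val (w!a) \<le> j}"
      using Bn_val[OF w] by auto
    moreover have "(\<lambda>i. letter_val (w!i)) ` {a \<in> {..<n}. letter_val (w!a) \<in> {1..j}} = {1..j}"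
    proof
      show "(\<lambda>i. letter_val (w!i)) ` {a \<in> {..<n}. letter_val (w!a) \<in> {1..j}} \<subseteq> {1..j}" by auto
      show "{1..j} \<subseteq> (\<lambda>i. letter_val (w!i)) ` {a \<in> {..<n}. letter_val (w!a) \<in> {1..j}}"
      proof
        fix x assume x: "x \<in> {1..j}"
        then have "x \<in> {1..n}" using j by auto
        then obtain a where "a \<in> {..<n}" "letter_val (w!a) = x" using bb unfolding bij_betw_def by (metis imageE)
        then show "x \<in> (\<lambda>i. letter_val (w!i)) ` {a \<in> {..<n}. letter_val (w!a) \<in> {1..j}}" using x by force
      qed
    qed
    ultimately show ?thesis by simp
  qed
  show ?thesis unfolding NN_def using bij_betw_same_card[OF b] by simp
qed

lemma NN_col: assumes w: "w \<in> Bn n" and i: "i \<le> n" shows "NN w i n = i"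
proof -
  have "{a. a < i \<and> letter_val (w!a) \<le> n} = {..<i}" using Bn_val[OF w] i by auto
  then show ?thesis unfolding NN_def by simp
qed

lemma Mentry_eq: "Mentry w (i+1) (j+1) = (if w!i = Unb (j+1) then 1 else if w!i = Bar (j+1) then -1 else 0)"
  unfolding Mentry_def by simp

lemma Mentry_nz: "Mentry w (i+1) (j+1) \<noteq> 0 \<longleftrightarrow> letter_val (w!i) = j+1"
  unfolding Mentry_eq by (cases "w!i") auto

lemma Mentry_range: "Mentry w (i+1) (j+1) \<in> {-1,0,1}"
  unfolding Mentry_eq by auto

lemma Mentry_neg: "Mentry w (i+1) (j+1) = -1 \<longleftrightarrow> w!i = Bar (j+1)"
  unfolding Mentry_eq by (cases "w!i") auto


definition GI :: "letter list \<Rightarrow> nat \<Rightarrow> nat \<Rightarrow> nat \<Rightarrow> bool" where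
  "GI w r i j \<longleftrightarrow> is_partition (grow w r i j) \<and> card (grow w r i j) = card (delta r) + 2 * NN w i j
     \<and> (0 < i \<longrightarrow> st (grow w r (i-1) j) (grow w r i j)) \<and> (0 < j \<longrightarrow> st (grow w r i (j-1)) (grow w r i j))"

lemma grow_Suc: "grow w r (Suc i) (Suc j) =
  local_rule (Mentry w (i+1) (j+1)) (grow w r i j) (grow w r (Suc i) j) (grow w r i (Suc j))" by simp

lemma GI_0: "GI w r 0 j" unfolding GI_def using delta_part by simp
lemma grow_j0[simp]: "grow w r i 0 = delta r" by (cases i) auto

lemma GI_0': assumes w: "w \<in> Bn n" and i: "i \<le> n" shows "GI w r i 0"
proof -
  have "\<And>a. a < i \<Longrightarrow> 1 \<le> letter_val (w!a)" using Bn_val[OF w] i by simp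
  then have "{a. a < i \<and> letter_val (w!a) \<le> 0} = {}" by fastforce
  then show ?thesis unfolding GI_def NN_def using delta_part by simp
qed

lemma step_valid:
  assumes w: "w \<in> Bn n" and ij: "i < n" "j < n"
    and g1: "GI w r i j" and g2: "GI w r (Suc i) j" and g3: "GI w r i (Suc j)"
  shows "valid (Mentry w (i+1) (j+1)) (grow w r i j) (grow w r (Suc i) j) (grow w r i (Suc j))"
proof -
  let ?la = "grow w r i j" and ?mu = "grow w r (Suc i) j" and ?nu = "grow w r i (Suc j)"
  have p: "is_partition ?la" "is_partition ?mu" "is_partition ?nu" using g1 g2 g3 unfolding GI_def by auto
  have s: "st ?la ?mu" "st ?la ?nu" using g2 g3 unfolding GI_def by auto
  have mz: "Mentry w (i+1) (j+1) \<noteq> 0 \<Longrightarrow> ?mu = ?la \<and> ?nu = ?la"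
  proof -
    assume "Mentry w (i+1) (j+1) \<noteq> 0"
    then have v: "letter_val (w!i) = j+1" using Mentry_nz by blast
    have n1: "NN w (Suc i) j = NN w i j" using NN_Suc[of w i j] v by simp
    have "{a. a < i \<and> letter_val (w!a) \<le> Suc j} = {a. a < i \<and> letter_val (w!a) \<le> j}"
    proof -
      have "\<And>a. a < i \<Longrightarrow> letter_val (w!a) \<noteq> Suc j" using Bn_inj[OF w] v ij by (metis Suc_eq_plus1 less_trans less_irrefl)
      then show ?thesis by (auto simp: le_Suc_eq)
    qed
    then have n2: "NN w i (Suc j) = NN w i j" unfolding NN_def by simp
    have c1: "card ?mu = card ?la" and c2: "card ?nu = card ?la" using g1 g2 g3 n1 n2 unfolding GI_def by auto
    have sub: "?la \<subseteq> ?mu" "?la \<subseteq> ?nu" using s unfolding st_def by auto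
    have "?la = ?mu" using card_subset_eq[OF part_fin[OF p(2)] sub(1)] c1 by simp
    moreover have "?la = ?nu" using card_subset_eq[OF part_fin[OF p(3)] sub(2)] c2 by simp
    ultimately show ?thesis by simp
  qed
  show ?thesis unfolding valid_def using p s mz Mentry_range by blast
qed

lemma step_GI:
  assumes w: "w \<in> Bn n" and ij: "i < n" "j < n"
    and g1: "GI w r i j" and g2: "GI w r (Suc i) j" and g3: "GI w r i (Suc j)"
  shows "GI w r (Suc i) (Suc j)"
proof -
  have v: "valid (Mentry w (i+1) (j+1)) (grow w r i j) (grow w r (Suc i) j) (grow w r i (Suc j))"
    by (rule step_valid[OF w ij g1 g2 g3])
  have L: "LF (Mentry w (i+1) (j+1)) (grow w r i j) (grow w r (Suc i) j) (grow w r i (Suc j)) (grow w r (Suc i) (Suc j))"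
    using LF_main[OF v] by simp
  have cr: "card (grow w r (Suc i) (Suc j)) + card (grow w r i j) = card (grow w r (Suc i) j) + card (grow w r i (Suc j))
       + (if Mentry w (i+1) (j+1) = 0 then 0 else 2)" using L unfolding LF_def by blast
  have nn: "NN w (Suc i) (Suc j) + NN w i j = NN w (Suc i) j + NN w i (Suc j) + (if Mentry w (i+1) (j+1) = 0 then 0 else 1)"
    using NN_Suc[of w i "Suc j"] NN_Suc[of w i j] Mentry_nz[of w i j] by auto
  have "card (grow w r (Suc i) (Suc j)) = card (delta r) + 2 * NN w (Suc i) (Suc j)"
    using cr nn g1 g2 g3 unfolding GI_def by (auto split: if_splits)
  then show ?thesis using L unfolding GI_def LF_def by simp
qed

lemma grid_GI:
  assumes w: "w \<in> Bn n" shows "i \<le> n \<Longrightarrow> j \<le> n \<Longrightarrow> GI w r i j"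
proof (induction i arbitrary: j)
  case 0 show ?case by (rule GI_0)
next
  case (Suc i)
  note outer = Suc.IH and op = Suc.prems
  show ?case using Suc.prems(2)
  proof (induction j)
    case 0 show ?case by (rule GI_0'[OF w op(1)])
  next
    case (Suc j)
    have g1: "GI w r i j" using outer op Suc.prems by simp
    have g3: "GI w r i (Suc j)" using outer op Suc.prems by simp
    have g2: "GI w r (Suc i) j" using Suc.IH Suc.prems by simp
    show ?case by (rule step_GI[OF w _ _ g1 g2 g3]) (use op Suc.prems in auto)
  qed
qed

lemma grid_valid:
  assumes w: "w \<in> Bn n" and ij: "i < n" "j < n"
  shows "valid (Mentry w (i+1) (j+1)) (grow w r i j) (grow w r (Suc i) j) (grow w r i (Suc j))"
  by (rule step_valid[OF w ij]) (use grid_GI[OF w] ij in auto)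

lemma grid_LF:
  assumes w: "w \<in> Bn n" and ij: "i < n" "j < n"
  shows "LF (Mentry w (i+1) (j+1)) (grow w r i j) (grow w r (Suc i) j) (grow w r i (Suc j)) (grow w r (Suc i) (Suc j))"
  using LF_main[OF grid_valid[OF w ij]] by simp

lemma Pd_nth: "j \<le> length w \<Longrightarrow> Pd r w ! j = grow w r (length w) j" unfolding Pd_def
  by (simp del: upt_Suc add: nth_map_upt)
lemma Qd_nth: "i \<le> length w \<Longrightarrow> Qd r w ! i = grow w r i (length w)" unfolding Qd_def
  by (simp del: upt_Suc add: nth_map_upt)
lemma Pd_len: "length (Pd r w) = length w + 1" unfolding Pd_def by simp
lemma Qd_len: "length (Qd r w) = length w + 1" unfolding Qd_def by simp

lemma st_ne_dom: "st a b \<Longrightarrow> a \<noteq> b \<Longrightarrow> a \<subseteq> b \<and> is_domino (b - a)" unfolding st_def by auto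

lemma Pd_SDT:
  assumes w: "w \<in> Bn n"
  shows "is_SDT r (grow w r n n) (Pd r w)"
proof -
  have len: "length w = n" using Bn_len[OF w] .
  have G: "\<And>i j. i \<le> n \<Longrightarrow> j \<le> n \<Longrightarrow> GI w r i j" using grid_GI[OF w] by blast
  show ?thesis unfolding is_SDT_def
  proof (intro conjI allI impI)
    show "Pd r w \<noteq> []" unfolding Pd_def by simp
    show "hd (Pd r w) = delta r" using Pd_nth[of 0 w r] len by (simp add: hd_conv_nth Pd_def del: upt_Suc)
    have "Pd r w \<noteq> []" unfolding Pd_def by simp
    then show "last (Pd r w) = grow w r n n" using Pd_nth[of n w r] len Pd_len[of r w] by (simp add: last_conv_nth)
    fix i assume "i < length (Pd r w)"
    then show "is_partition (Pd r w ! i)" using Pd_nth[of i w r] len Pd_len[of r w] G[of n i] unfolding GI_def by simp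
  next
    fix i assume i: "i + 1 < length (Pd r w)"
    then have i': "i < n" using Pd_len[of r w] len by simp
    have e: "Pd r w ! i = grow w r n i" "Pd r w ! (i+1) = grow w r n (i+1)" using Pd_nth[of _ w r] len i' by auto
    have s: "st (grow w r n i) (grow w r n (i+1))" using G[of n "i+1"] i' unfolding GI_def by simp
    have "card (grow w r n i) \<noteq> card (grow w r n (i+1))" using G[of n i] G[of n "i+1"] i' NN_row[OF w, of i] NN_row[OF w, of "i+1"]
      unfolding GI_def by simp
    then have "grow w r n i \<noteq> grow w r n (i+1)" by metis
    then show "Pd r w ! i \<subseteq> Pd r w ! (i+1)" "is_domino (Pd r w ! (i+1) - Pd r w ! i)" using st_ne_dom[OF s] e by auto
  qed
qed

lemma Qd_SDT:
  assumes w: "w \<in> Bn n"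
  shows "is_SDT r (grow w r n n) (Qd r w)"
proof -
  have len: "length w = n" using Bn_len[OF w] .
  have G: "\<And>i j. i \<le> n \<Longrightarrow> j \<le> n \<Longrightarrow> GI w r i j" using grid_GI[OF w] by blast
  show ?thesis unfolding is_SDT_def
  proof (intro conjI allI impI)
    show "Qd r w \<noteq> []" unfolding Qd_def by simp
    show "hd (Qd r w) = delta r" using Qd_nth[of 0 w r] len by (simp add: hd_conv_nth Qd_def del: upt_Suc)
    have "Qd r w \<noteq> []" unfolding Qd_def by simp
    then show "last (Qd r w) = grow w r n n" using Qd_nth[of n w r] len Qd_len[of r w] by (simp add: last_conv_nth)
    fix i assume "i < length (Qd r w)"
    then show "is_partition (Qd r w ! i)" using Qd_nth[of i w r] len Qd_len[of r w] G[of i n] unfolding GI_def by simp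
  next
    fix i assume i: "i + 1 < length (Qd r w)"
    then have i': "i < n" using Qd_len[of r w] len by simp
    have e: "Qd r w ! i = grow w r i n" "Qd r w ! (i+1) = grow w r (i+1) n" using Qd_nth[of _ w r] len i' by auto
    have s: "st (grow w r i n) (grow w r (i+1) n)" using G[of "i+1" n] i' unfolding GI_def by simp
    have "card (grow w r i n) \<noteq> card (grow w r (i+1) n)" using G[of i n] G[of "i+1" n] i' NN_col[OF w, of i] NN_col[OF w, of "i+1"]
      unfolding GI_def by simp
    then have "grow w r i n \<noteq> grow w r (i+1) n" by metis
    then show "Qd r w ! i \<subseteq> Qd r w ! (i+1)" "is_domino (Qd r w ! (i+1) - Qd r w ! i)" using st_ne_dom[OF s] e by auto
  qed
qed

lemma shape_Pr:
  assumes w: "w \<in> Bn n" shows "grow w r n n \<in> Pr r n"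
proof -
  have "GI w r n n" using grid_GI[OF w] by simp
  then show ?thesis using SDT_Pr[OF Pd_SDT[OF w]] NN_row[OF w, of n] unfolding GI_def by simp
qed


lemma card_sum_bool: "card {j. j < (n::nat) \<and> P j} = (\<Sum>j<n. if P j then 1 else 0)"
  by (induction n) (simp_all add: card_lessSuc)

lemma sum_shift0: "f 0 = (0::nat) \<Longrightarrow> (\<Sum>i<n. f (Suc i)) = (\<Sum>i<n. f i) + f n"
  by (induction n) simp_all

lemma sp_Pd:
  assumes w: "w \<in> Bn n"
  shows "sp (Pd r w) = of_nat (\<Sum>j<n. vd (grow w r n j) (grow w r n (Suc j))) / 2"
proof -
  have len: "length w = n" using Bn_len[OF w] .
  have "{i. i + 1 < length (Pd r w) \<and> vertical_domino (Pd r w ! (i+1) - Pd r w ! i)}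
      = {j. j < n \<and> vertical_domino (grow w r n (Suc j) - grow w r n j)}"
    using Pd_len[of r w] Pd_nth[of _ w r] len by auto
  then show ?thesis unfolding sp_def vd_def by (simp add: card_sum_bool)
qed

lemma sp_Qd:
  assumes w: "w \<in> Bn n"
  shows "sp (Qd r w) = of_nat (\<Sum>i<n. vd (grow w r i n) (grow w r (Suc i) n)) / 2"
proof -
  have len: "length w = n" using Bn_len[OF w] .
  have "{i. i + 1 < length (Qd r w) \<and> vertical_domino (Qd r w ! (i+1) - Qd r w ! i)}
      = {i. i < n \<and> vertical_domino (grow w r (Suc i) n - grow w r i n)}"
    using Qd_len[of r w] Qd_nth[of _ w r] len by auto
  then show ?thesis unfolding sp_def vd_def by (simp add: card_sum_bool)
qed

lemma row_E:
  assumes w: "w \<in> Bn n" and i: "i < n"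
  shows "(\<Sum>j<n. if Mentry w (Suc i) (Suc j) = -1 then 2 else 0) = (if is_barred (w!i) then (2::nat) else 0)"
proof -
  have v: "1 \<le> letter_val (w!i)" "letter_val (w!i) \<le> n" using Bn_val[OF w i] by auto
  have e: "(Mentry w (Suc i) (Suc j) = -1) = (is_barred (w!i) \<and> j = letter_val (w!i) - 1)" for j
  proof -
    have "(Mentry w (Suc i) (Suc j) = -1) = (w!i = Bar (Suc j))" using Mentry_neg[of w i j] by simp
    also have "\<dots> = (is_barred (w!i) \<and> j = letter_val (w!i) - 1)"
    proof (cases "w!i")
      case (Unb x) then show ?thesis by simp
    next
      case (Bar x) then show ?thesis using v by auto
    qed
    finally show ?thesis .
  qed
  have "(\<Sum>j<n. if Mentry w (Suc i) (Suc j) = -1 then 2 else 0) =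
        (\<Sum>j<n. if j = letter_val (w!i) - 1 then (if is_barred (w!i) then 2 else 0) else (0::nat))"
    by (rule sum.cong) (auto simp: e)
  also have "\<dots> = (if is_barred (w!i) then 2 else 0)"
  proof -
    have vl: "letter_val (w!i) - 1 \<in> {..<n}" using v by auto
    show ?thesis by (simp only: sum.delta[OF finite_lessThan] vl if_True)
  qed
  finally show ?thesis .
qed

lemma tc_sum: "w \<in> Bn n \<Longrightarrow> tc w = (\<Sum>i<n. if is_barred (w!i) then 1 else 0)"
  unfolding tc_def using Bn_len[of w n] by (simp add: length_filter_conv_card card_sum_bool)

lemma tc_identity:
  assumes w: "w \<in> Bn n"
  shows "of_nat (tc w) = sp (Pd r w) + sp (Qd r w)"
proof -
  define K where "K i j = vd (grow w r i j) (grow w r i (Suc j))" for i j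
  define H where "H i j = vd (grow w r i j) (grow w r (Suc i) j)" for i j
  define E where "E i j = (if Mentry w (i+1) (j+1) = -1 then 2 else (0::nat))" for i j
  have sq: "\<And>i j. i < n \<Longrightarrow> j < n \<Longrightarrow> K (Suc i) j + H i (Suc j) = H i j + K i j + E i j"
    using grid_LF[OF w] unfolding LF_def K_def H_def E_def by simp
  have K0: "\<And>j. K 0 j = 0" unfolding K_def by simp
  have H0: "\<And>i. H i 0 = 0" unfolding H_def by simp
  have "(\<Sum>i<n. \<Sum>j<n. K (Suc i) j + H i (Suc j)) = (\<Sum>i<n. \<Sum>j<n. H i j + K i j + E i j)"
    by (intro sum.cong refl) (simp add: sq)
  moreover have "(\<Sum>i<n. \<Sum>j<n. K (Suc i) j + H i (Suc j)) = (\<Sum>i<n. \<Sum>j<n. K (Suc i) j) + (\<Sum>i<n. \<Sum>j<n. H i (Suc j))"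
    by (simp only: sum.distrib)
  moreover have "(\<Sum>i<n. \<Sum>j<n. K (Suc i) j) = (\<Sum>j<n. \<Sum>i<n. K (Suc i) j)" by (rule sum.swap)
  moreover have "(\<Sum>j<n. \<Sum>i<n. K (Suc i) j) = (\<Sum>j<n. (\<Sum>i<n. K i j) + K n j)"
    by (intro sum.cong refl) (rule sum_shift0, rule K0)
  moreover have "(\<Sum>i<n. \<Sum>j<n. H i (Suc j)) = (\<Sum>i<n. (\<Sum>j<n. H i j) + H i n)"
    by (intro sum.cong refl) (rule sum_shift0, rule H0)
  moreover have "(\<Sum>i<n. \<Sum>j<n. H i j + K i j + E i j) = (\<Sum>i<n. \<Sum>j<n. H i j) + (\<Sum>i<n. \<Sum>j<n. K i j) + (\<Sum>i<n. \<Sum>j<n. E i j)"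
    by (simp only: sum.distrib)
  moreover have "(\<Sum>i<n. \<Sum>j<n. K i j) = (\<Sum>j<n. \<Sum>i<n. K i j)" by (rule sum.swap)
  moreover have "(\<Sum>j<n. (\<Sum>i<n. K i j) + K n j) = (\<Sum>j<n. \<Sum>i<n. K i j) + (\<Sum>j<n. K n j)" by (simp only: sum.distrib)
  moreover have "(\<Sum>i<n. (\<Sum>j<n. H i j) + H i n) = (\<Sum>i<n. \<Sum>j<n. H i j) + (\<Sum>i<n. H i n)" by (simp only: sum.distrib)
  ultimately have A: "(\<Sum>j<n. K n j) + (\<Sum>i<n. H i n) = (\<Sum>i<n. \<Sum>j<n. E i j)" by linarith
  have "(\<Sum>i<n. \<Sum>j<n. E i j) = (\<Sum>i<n. if is_barred (w!i) then 2 else 0)"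
    unfolding E_def by (intro sum.cong refl) (simp add: row_E[OF w])
  also have "\<dots> = 2 * tc w" unfolding tc_sum[OF w] sum_distrib_left by (rule sum.cong) auto
  finally have B: "(\<Sum>j<n. K n j) + (\<Sum>i<n. H i n) = 2 * tc w" using A by simp
  have "sp (Pd r w) + sp (Qd r w) = (of_nat ((\<Sum>j<n. K n j) + (\<Sum>i<n. H i n)) :: rat) / 2"
    unfolding sp_Pd[OF w] sp_Qd[OF w] K_def H_def by (simp add: add_divide_distrib)
  also have "\<dots> = of_nat (tc w)" unfolding B by simp
  finally show ?thesis by simp
qed


lemma grid_bck:
  assumes w: "w \<in> Bn n" and ij: "i < n" "j < n"
  shows "bck (grow w r (Suc i) j) (grow w r i (Suc j)) (grow w r (Suc i) (Suc j)) = (Mentry w (i+1) (j+1), grow w r i j)"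
  using grid_LF[OF w ij, of r] unfolding LF_def by blast

lemma inj_main:
  assumes w: "w \<in> Bn n" and w': "w' \<in> Bn n" and eP: "Pd r w = Pd r w'" and eQ: "Qd r w = Qd r w'"
  shows "w = w'"
proof -
  have len: "length w = n" "length w' = n" using Bn_len w w' by auto
  have bP: "\<And>j. j \<le> n \<Longrightarrow> grow w r n j = grow w' r n j" using Pd_nth[of _ w r] Pd_nth[of _ w' r] eP len by metis
  have bQ: "\<And>i. i \<le> n \<Longrightarrow> grow w r i n = grow w' r i n" using Qd_nth[of _ w r] Qd_nth[of _ w' r] eQ len by metis
  have G: "\<And>i j. i \<le> n \<Longrightarrow> j \<le> n \<Longrightarrow> (n - i) + (n - j) \<le> d \<Longrightarrow> grow w r i j = grow w' r i j" for d
  proof (induction d)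
    case 0 then have "i = n" by simp
    then show ?case using bP 0 by simp
  next
    case (Suc d)
    show ?case
    proof (cases "i = n \<or> j = n")
      case True then show ?thesis using bP bQ Suc.prems by auto
    next
      case False
      then have ij: "i < n" "j < n" using Suc.prems by auto
      have e1: "grow w r (Suc i) j = grow w' r (Suc i) j" by (rule Suc.IH) (use ij Suc.prems in auto)
      have e2: "grow w r i (Suc j) = grow w' r i (Suc j)" by (rule Suc.IH) (use ij Suc.prems in auto)
      have e3: "grow w r (Suc i) (Suc j) = grow w' r (Suc i) (Suc j)" by (rule Suc.IH) (use ij Suc.prems in auto)
      have "(Mentry w (i+1) (j+1), grow w r i j) = (Mentry w' (i+1) (j+1), grow w' r i j)"
        using grid_bck[OF w ij, of r] grid_bck[OF w' ij, of r] e1 e2 e3 by metis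
      then show ?thesis by (simp del: grow.simps)
    qed
  qed
  have M: "\<And>i j. i < n \<Longrightarrow> j < n \<Longrightarrow> Mentry w (i+1) (j+1) = Mentry w' (i+1) (j+1)"
  proof -
    fix i j assume ij: "i < n" "j < n"
    have "grow w r (Suc i) j = grow w' r (Suc i) j" by (rule G) (use ij in auto)
    moreover have "grow w r i (Suc j) = grow w' r i (Suc j)" by (rule G) (use ij in auto)
    moreover have "grow w r (Suc i) (Suc j) = grow w' r (Suc i) (Suc j)" by (rule G) (use ij in auto)
    ultimately have "(Mentry w (i+1) (j+1), grow w r i j) = (Mentry w' (i+1) (j+1), grow w' r i j)"
      using grid_bck[OF w ij, of r] grid_bck[OF w' ij, of r] by metis
    then show "Mentry w (i+1) (j+1) = Mentry w' (i+1) (j+1)" by (simp del: grow.simps)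
  qed
  show ?thesis
  proof (rule nth_equalityI)
    show "length w = length w'" using len by simp
    fix i assume "i < length w"
    then have i: "i < n" using len by simp
    define v where "v = letter_val (w!i)"
    have v: "1 \<le> v" "v \<le> n" using Bn_val[OF w i] v_def by auto
    have "Mentry w (i+1) ((v-1)+1) \<noteq> 0" using Mentry_nz[of w i "v-1"] v v_def by simp
    then have m: "Mentry w' (i+1) ((v-1)+1) = Mentry w (i+1) ((v-1)+1)" "Mentry w' (i+1) ((v-1)+1) \<noteq> 0"
      using M[OF i, of "v-1"] v by auto
    then have v': "letter_val (w'!i) = v" using Mentry_nz[of w' i "v-1"] v by simp
    have vv: "v - 1 + 1 = v" using v by simp
    show "w!i = w'!i"
      using m v' v_def vv by (cases "w!i"; cases "w'!i") (auto simp: Mentry_def)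
  qed
qed


function bg :: "nat \<Rightarrow> cells list \<Rightarrow> cells list \<Rightarrow> nat \<Rightarrow> nat \<Rightarrow> cells" where
  "bg n P Q i j = (if n \<le> i then P ! j else if n \<le> j then Q ! i
     else snd (bck (bg n P Q (Suc i) j) (bg n P Q i (Suc j)) (bg n P Q (Suc i) (Suc j))))"
  by pat_completeness auto
termination by (relation "measure (\<lambda>(n,P,Q,i,j). (n - i) + (n - j))") auto

declare bg.simps[simp del]

definition mb :: "nat \<Rightarrow> cells list \<Rightarrow> cells list \<Rightarrow> nat \<Rightarrow> nat \<Rightarrow> int" where
  "mb n P Q i j = fst (bck (bg n P Q (Suc i) j) (bg n P Q i (Suc j)) (bg n P Q (Suc i) (Suc j)))"

lemma bg_top: "n \<le> i \<Longrightarrow> bg n P Q i j = P ! j" by (subst bg.simps) simp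
lemma bg_right: "\<not> n \<le> i \<Longrightarrow> n \<le> j \<Longrightarrow> bg n P Q i j = Q ! i" by (subst bg.simps) simp
lemma bg_in: "i < n \<Longrightarrow> j < n \<Longrightarrow> bg n P Q i j = snd (bck (bg n P Q (Suc i) j) (bg n P Q i (Suc j)) (bg n P Q (Suc i) (Suc j)))"
  by (subst bg.simps) simp

lemma st_delta: "st x (delta r) \<Longrightarrow> is_partition x \<Longrightarrow> x = delta r"
proof -
  assume s: "st x (delta r)" and p: "is_partition x"
  show "x = delta r"
  proof (rule ccontr)
    assume "x \<noteq> delta r"
    then have "(delta r, x) \<in> domino_removal" using s p delta_part unfolding st_def domino_removal_def by auto
    then show False using delta_terminal by blast
  qed
qed

lemma sum01: "(\<Sum>j<(n::nat). if P j then 1 else 0) = (1::nat) \<Longrightarrow> \<exists>!j. j < n \<and> P j"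
proof -
  assume "(\<Sum>j<(n::nat). if P j then 1 else 0) = (1::nat)"
  then have "card {j. j < n \<and> P j} = 1" by (simp add: card_sum_bool)
  then obtain x where "{j. j < n \<and> P j} = {x}" by (rule card_1_singletonE)
  then show ?thesis by (metis (mono_tags, lifting) mem_Collect_eq singletonD singletonI)
qed

locale surjctx =
  fixes r n :: nat and la :: cells and P Q :: "cells list"
  assumes laP: "la \<in> Pr r n" and sP: "is_SDT r la P" and sQ: "is_SDT r la Q"
begin

abbreviation "B \<equiv> bg n P Q"
abbreviation "mB \<equiv> mb n P Q"

lemma cla: "card la = card (delta r) + 2 * n" using laP unfolding Pr_def by simp

lemma PF: "length P = n+1" "P!0 = delta r" "P!n = la" "\<And>i. i \<le> n \<Longrightarrow> is_partition (P!i)"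
    "\<And>i. i < n \<Longrightarrow> st (P!i) (P!(i+1))" "\<And>i. i < n \<Longrightarrow> card (P!(i+1)) = card (P!i) + 2"
  using SDT_facts[OF sP cla] by auto
lemma QF: "length Q = n+1" "Q!0 = delta r" "Q!n = la" "\<And>i. i \<le> n \<Longrightarrow> is_partition (Q!i)"
    "\<And>i. i < n \<Longrightarrow> st (Q!i) (Q!(i+1))" "\<And>i. i < n \<Longrightarrow> card (Q!(i+1)) = card (Q!i) + 2"
  using SDT_facts[OF sQ cla] by auto

lemma B_top: "j \<le> n \<Longrightarrow> B n j = P ! j" by (rule bg_top) simp
lemma B_right: "i \<le> n \<Longrightarrow> B i n = Q ! i"
  by (cases "i = n") (simp_all add: bg_top bg_right PF(3) QF(3))

definition HB where "HB i j \<longleftrightarrow> is_partition (B i j) \<and> (i < n \<longrightarrow> st (B i j) (B (Suc i) j)) \<and> (j < n \<longrightarrow> st (B i j) (B i (Suc j)))"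

lemma HB_all: "i \<le> n \<Longrightarrow> j \<le> n \<Longrightarrow> (n - i) + (n - j) \<le> d \<Longrightarrow> HB i j"
proof (induction d arbitrary: i j)
  case 0
  then have "i = n" "j = n" by auto
  then show ?case unfolding HB_def using B_top PF(4) by simp
next
  case (Suc d)
  show ?case
  proof (cases "i = n")
    case True
    then show ?thesis unfolding HB_def using B_top PF(4,5) Suc.prems by auto
  next
    case inl: False
    show ?thesis
    proof (cases "j = n")
      case True
      then show ?thesis unfolding HB_def using B_right QF(4,5) Suc.prems inl by auto
    next
      case False
      then have ij: "i < n" "j < n" using inl Suc.prems by auto
      have h1: "HB (Suc i) j" by (rule Suc.IH) (use ij Suc.prems in auto)
      have h2: "HB i (Suc j)" by (rule Suc.IH) (use ij Suc.prems in auto)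
      have h3: "HB (Suc i) (Suc j)" by (rule Suc.IH) (use ij Suc.prems in auto)
      have "valid (fst (bck (B (Suc i) j) (B i (Suc j)) (B (Suc i) (Suc j)))) (snd (bck (B (Suc i) j) (B i (Suc j)) (B (Suc i) (Suc j)))) (B (Suc i) j) (B i (Suc j))"
        using bck_props[of "B (Suc i) j" "B i (Suc j)" "B (Suc i) (Suc j)"] h1 h2 h3 ij unfolding HB_def by auto
      then have "valid (mB i j) (B i j) (B (Suc i) j) (B i (Suc j))" unfolding mb_def using bg_in[OF ij] by simp
      then show ?thesis unfolding HB_def valid_def using ij by auto
    qed
  qed
qed

lemma HB: "i \<le> n \<Longrightarrow> j \<le> n \<Longrightarrow> HB i j" using HB_all by blast

lemma sq: assumes ij: "i < n" "j < n"
  shows "valid (mB i j) (B i j) (B (Suc i) j) (B i (Suc j)) \<and> local_rule (mB i j) (B i j) (B (Suc i) j) (B i (Suc j)) = B (Suc i) (Suc j)"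
proof -
  have h1: "HB (Suc i) j" "HB i (Suc j)" "HB (Suc i) (Suc j)" using HB ij by auto
  show ?thesis using bck_props[of "B (Suc i) j" "B i (Suc j)" "B (Suc i) (Suc j)"] h1 ij bg_in[OF ij]
    unfolding HB_def mb_def by auto
qed

lemma B_left0: "k \<le> n \<Longrightarrow> B 0 (n - k) = delta r"
proof (induction k)
  case 0 then show ?case using B_right[of 0] QF(2) by simp
next
  case (Suc k)
  then have "st (B 0 (n - Suc k)) (B 0 (Suc (n - Suc k)))" "is_partition (B 0 (n - Suc k))" using HB[of 0 "n - Suc k"] unfolding HB_def by auto
  moreover have "Suc (n - Suc k) = n - k" using Suc.prems by simp
  ultimately show ?case using st_delta Suc by simp
qed

lemma B_top0: "k \<le> n \<Longrightarrow> B (n - k) 0 = delta r"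
proof (induction k)
  case 0 then show ?case using B_top[of 0] PF(2) by simp
next
  case (Suc k)
  then have "st (B (n - Suc k) 0) (B (Suc (n - Suc k)) 0)" "is_partition (B (n - Suc k) 0)" using HB[of "n - Suc k" 0] unfolding HB_def by auto
  moreover have "Suc (n - Suc k) = n - k" using Suc.prems by simp
  ultimately show ?case using st_delta Suc by simp
qed

lemma B_row0: "j \<le> n \<Longrightarrow> B 0 j = delta r" using B_left0[of "n - j"] by simp
lemma B_col0: "i \<le> n \<Longrightarrow> B i 0 = delta r" using B_top0[of "n - i"] by simp

lemma sq_card: assumes ij: "i < n" "j < n"
  shows "card (B (Suc i) (Suc j)) + card (B i j) = card (B (Suc i) j) + card (B i (Suc j)) + (if mB i j = 0 then 0 else 2)"
  using LF_main[of "mB i j" "B i j" "B (Suc i) j" "B i (Suc j)"] sq[OF ij] unfolding LF_def by auto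

lemma mB_range: "i < n \<Longrightarrow> j < n \<Longrightarrow> mB i j \<in> {-1,0,1}" using sq unfolding valid_def by blast

lemma row_sum: assumes i: "i < n" shows "(\<Sum>j<n. if mB i j = 0 then 0 else 1) = (1::nat)"
proof -
  have "j \<le> n \<Longrightarrow> int (card (B (Suc i) j)) - int (card (B i j)) = 2 * int (\<Sum>j'<j. if mB i j' = 0 then 0 else 1)" for j
  proof (induction j)
    case 0 then show ?case using B_col0[of i] B_col0[of "Suc i"] i by simp
  next
    case (Suc j)
    then show ?case using sq_card[OF i, of j] by (auto split: if_splits)
  qed
  from this[of n] have "int (card (B (Suc i) n)) - int (card (B i n)) = 2 * int (\<Sum>j'<n. if mB i j' = 0 then 0 else 1)" by simp
  moreover have "card (B (Suc i) n) = card (B i n) + 2" using B_right[of i] B_right[of "Suc i"] QF(6)[OF i] i by simp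
  ultimately have "int (\<Sum>j'<n. if mB i j' = 0 then 0 else 1) = 1" by linarith
  then show ?thesis by (simp only: of_nat_eq_1_iff)
qed

lemma col_sum: assumes j: "j < n" shows "(\<Sum>i<n. if mB i j = 0 then 0 else 1) = (1::nat)"
proof -
  have "i \<le> n \<Longrightarrow> int (card (B i (Suc j))) - int (card (B i j)) = 2 * int (\<Sum>i'<i. if mB i' j = 0 then 0 else 1)" for i
  proof (induction i)
    case 0 then show ?case using B_row0[of j] B_row0[of "Suc j"] j by simp
  next
    case (Suc i)
    then show ?case using sq_card[OF _ j, of i] by (auto split: if_splits)
  qed
  from this[of n] have "int (card (B n (Suc j))) - int (card (B n j)) = 2 * int (\<Sum>i'<n. if mB i' j = 0 then 0 else 1)" by simp
  moreover have "card (B n (Suc j)) = card (B n j) + 2" using B_top[of j] B_top[of "Suc j"] PF(6)[OF j] j by simp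
  ultimately have "int (\<Sum>i'<n. if mB i' j = 0 then 0 else 1) = 1" by linarith
  then show ?thesis by (simp only: of_nat_eq_1_iff)
qed

end


context surjctx begin

definition JJ :: "nat \<Rightarrow> nat" where "JJ i = (THE j. j < n \<and> mB i j \<noteq> 0)"

lemma flip01: "(\<Sum>j<(m::nat). if f j = (0::int) then 0 else 1) = (\<Sum>j<m. if f j \<noteq> 0 then 1 else (0::nat))"
  by (rule sum.cong) auto

lemma JJ_ex: "i < n \<Longrightarrow> \<exists>!j. j < n \<and> mB i j \<noteq> 0"
  using row_sum[of i] flip01[of "mB i" n] sum01[where n=n and P="\<lambda>j. mB i j \<noteq> 0"] by simp

lemma JJ_prop: assumes "i < n" shows "JJ i < n" "mB i (JJ i) \<noteq> 0"
  using theI'[OF JJ_ex[OF assms]] unfolding JJ_def by auto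

lemma JJ_uniq: "i < n \<Longrightarrow> j < n \<Longrightarrow> mB i j \<noteq> 0 \<Longrightarrow> j = JJ i"
  using JJ_ex JJ_prop by blast

definition ww :: "letter list" where
  "ww = map (\<lambda>i. if mB i (JJ i) = 1 then Unb (Suc (JJ i)) else Bar (Suc (JJ i))) [0..<n]"

lemma ww_len: "length ww = n" unfolding ww_def by simp
lemma ww_nth: "i < n \<Longrightarrow> ww ! i = (if mB i (JJ i) = 1 then Unb (Suc (JJ i)) else Bar (Suc (JJ i)))"
  unfolding ww_def by simp
lemma ww_val: "i < n \<Longrightarrow> letter_val (ww ! i) = Suc (JJ i)" using ww_nth by simp

lemma ww_Bn: "ww \<in> Bn n"
  unfolding Bn_def
proof (intro CollectI conjI ballI)
  show "length ww = n" by (rule ww_len)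
  show "set (map letter_val ww) \<subseteq> {1..n}"
  proof
    fix x assume "x \<in> set (map letter_val ww)"
    then obtain i where "i < n" "x = letter_val (ww!i)" using ww_len by (auto simp: in_set_conv_nth)
    then show "x \<in> {1..n}" using ww_val JJ_prop by fastforce
  qed
  fix k assume k: "k \<in> {1..n}"
  have "{i. i < n \<and> letter_val (ww!i) = k} = {i. i < n \<and> mB i (k-1) \<noteq> 0}"
  proof -
    have "\<And>i. i < n \<Longrightarrow> (letter_val (ww!i) = k) = (mB i (k-1) \<noteq> 0)"
    proof -
      fix i assume i: "i < n"
      show "(letter_val (ww!i) = k) = (mB i (k-1) \<noteq> 0)"
        using ww_val[OF i] JJ_prop[OF i] JJ_uniq[OF i, of "k-1"] k by auto
    qed
    then show ?thesis by blast
  qed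
  moreover have "card {i. i < n \<and> mB i (k-1) \<noteq> 0} = 1"
  proof -
    have kk: "k - 1 < n" using k by auto
    show ?thesis using col_sum[OF kk] flip01[of "\<lambda>i. mB i (k-1)" n] by (simp add: card_sum_bool)
  qed
  ultimately show "length (filter (\<lambda>x. letter_val x = k) ww) = 1"
    by (simp add: length_filter_conv_card ww_len)
qed

lemma ww_Mentry: assumes ij: "i < n" "j < n" shows "Mentry ww (i+1) (j+1) = mB i j"
proof (cases "j = JJ i")
  case True
  have "mB i j \<in> {-1, 1}" using mB_range[OF ij] JJ_prop[OF ij(1)] True by auto
  then show ?thesis unfolding Mentry_eq using ww_nth[OF ij(1)] True by auto
next
  case False
  then have "mB i j = 0" using JJ_uniq[OF ij] by blast
  then show ?thesis unfolding Mentry_eq using ww_nth[OF ij(1)] False by auto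
qed

lemma ww_grow: "i \<le> n \<Longrightarrow> j \<le> n \<Longrightarrow> grow ww r i j = B i j"
proof (induction i arbitrary: j)
  case 0 then show ?case using B_row0 by simp
next
  case (Suc i)
  note outer = Suc.IH and op = Suc.prems
  show ?case using op(2)
  proof (induction j)
    case 0 then show ?case using B_col0 op by simp
  next
    case (Suc j)
    have ij: "i < n" "j < n" using op Suc.prems by auto
    have "grow ww r (Suc i) (Suc j) = local_rule (Mentry ww (i+1) (j+1)) (grow ww r i j) (grow ww r (Suc i) j) (grow ww r i (Suc j))"
      by simp
    also have "\<dots> = local_rule (mB i j) (B i j) (B (Suc i) j) (B i (Suc j))"
      using ww_Mentry[OF ij] outer[of j] outer[of "Suc j"] Suc.IH ij by simp
    also have "\<dots> = B (Suc i) (Suc j)" using sq[OF ij] by simp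
    finally show ?case .
  qed
qed

lemma ww_Pd: "Pd r ww = P"
proof (rule nth_equalityI)
  show "length (Pd r ww) = length P" using Pd_len[of r ww] ww_len PF(1) by simp
  fix j assume "j < length (Pd r ww)"
  then have j: "j \<le> n" using Pd_len[of r ww] ww_len by simp
  show "Pd r ww ! j = P ! j" using Pd_nth[of j ww r] ww_len j ww_grow[of n j] B_top[OF j] by simp
qed

lemma ww_Qd: "Qd r ww = Q"
proof (rule nth_equalityI)
  show "length (Qd r ww) = length Q" using Qd_len[of r ww] ww_len QF(1) by simp
  fix i assume "i < length (Qd r ww)"
  then have i: "i \<le> n" using Qd_len[of r ww] ww_len by simp
  show "Qd r ww ! i = Q ! i" using Qd_nth[of i ww r] ww_len i ww_grow[of i n] B_right[OF i] by simp
qed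

lemma surj_ex: "\<exists>w \<in> Bn n. Pd r w = P \<and> Qd r w = Q" using ww_Bn ww_Pd ww_Qd by blast

end

lemma surj_main:
  assumes "la \<in> Pr r n" "is_SDT r la P" "is_SDT r la Q"
  shows "\<exists>w \<in> Bn n. Pd r w = P \<and> Qd r w = Q"
  using surjctx.surj_ex[of r n la P Q] assms unfolding surjctx_def by blast

theorem theorem2p2:
  fixes r n :: nat
  shows "bij_betw (\<lambda>w. (Pd r w, Qd r w)) (Bn n)
           {(P, Q). \<exists>la \<in> Pr r n. is_SDT r la P \<and> is_SDT r la Q}
         \<and> (\<forall>w \<in> Bn n. of_nat (tc w) = sp (Pd r w) + sp (Qd r w))"
proof (intro conjI ballI)
  show "bij_betw (\<lambda>w. (Pd r w, Qd r w)) (Bn n) {(P, Q). \<exists>la \<in> Pr r n. is_SDT r la P \<and> is_SDT r la Q}"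
    unfolding bij_betw_def
  proof (intro conjI)
    show "inj_on (\<lambda>w. (Pd r w, Qd r w)) (Bn n)"
      unfolding inj_on_def using inj_main by blast
    show "(\<lambda>w. (Pd r w, Qd r w)) ` Bn n = {(P, Q). \<exists>la \<in> Pr r n. is_SDT r la P \<and> is_SDT r la Q}"
    proof
      show "(\<lambda>w. (Pd r w, Qd r w)) ` Bn n \<subseteq> {(P, Q). \<exists>la \<in> Pr r n. is_SDT r la P \<and> is_SDT r la Q}"
        using shape_Pr Pd_SDT Qd_SDT by blast
      show "{(P, Q). \<exists>la \<in> Pr r n. is_SDT r la P \<and> is_SDT r la Q} \<subseteq> (\<lambda>w. (Pd r w, Qd r w)) ` Bn n"
      proof
        fix x assume "x \<in> {(P, Q). \<exists>la \<in> Pr r n. is_SDT r la P \<and> is_SDT r la Q}"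
        then obtain P Q la where x: "x = (P,Q)" "la \<in> Pr r n" "is_SDT r la P" "is_SDT r la Q" by blast
        then obtain w where "w \<in> Bn n" "Pd r w = P" "Qd r w = Q" using surj_main by blast
        then show "x \<in> (\<lambda>w. (Pd r w, Qd r w)) ` Bn n" using x by force
      qed
    qed
  qed
next
  fix w assume "w \<in> Bn n"
  then show "of_nat (tc w) = sp (Pd r w) + sp (Qd r w)" by (rule tc_identity)
qed


end
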